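(* Let $G$ be a cyclically $4$-edge-connected cubic graph and let $e$ and $f$ be two edges of $G$. Then $G$ has no perfect matching that avoids $e$ and contains $f$ if and only if the graph $G-\{e,f\}$ (obtained by deleting the two edges) is bipartite, with both end-vertices of $e$ in one color class and both end-vertices of $f$ in the other color class.
   Context: Graphs may have parallel edges. An edge-cut $E(A,B)$ (edges between the parts of a partition $\{A,B\}$ of $V(G)$) is cyclic if both $G[A]$ and $G[B]$ contain a cycle; $G$ is cyclically $k$-edge-connected if it has no cyclic edge-cut with fewer than $k$ edges. *)

theory Defs
  imports Main
begin

text \<open>Finite loopless multigraphs (parallel edges allowed): vertex set V, edge set E,
  and an incidence map ends giving the two distinct end-vertices of each edge.\<close>

definition multigraph :: "'v set \<Rightarrow> 'e set \<Rightarrow> ('e \<Rightarrow> 'v set) \<Rightarrow> bool" where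
  "multigraph V E ends \<longleftrightarrow> finite V \<and> finite E \<and>
     (\<forall>e\<in>E. card (ends e) = 2 \<and> ends e \<subseteq> V)"

definition degree :: "'e set \<Rightarrow> ('e \<Rightarrow> 'v set) \<Rightarrow> 'v \<Rightarrow> nat" where
  "degree E ends v = card {e\<in>E. v \<in> ends e}"

definition cubic :: "'v set \<Rightarrow> 'e set \<Rightarrow> ('e \<Rightarrow> 'v set) \<Rightarrow> bool" where
  "cubic V E ends \<longleftrightarrow> multigraph V E ends \<and> (\<forall>v\<in>V. degree E ends v = 3)"

text \<open>The induced subgraph G[A] contains a cycle: distinct vertices v_0..v_(k-1) in A and
  distinct edges e_0..e_(k-1) of G with e_i joining v_i and v_(i+1 mod k), k >= 2
  (k = 2 is a pair of parallel edges).\<close>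
definition has_cycle_in :: "'e set \<Rightarrow> ('e \<Rightarrow> 'v set) \<Rightarrow> 'v set \<Rightarrow> bool" where
  "has_cycle_in E ends A \<longleftrightarrow>
     (\<exists>vs es. length vs = length es \<and> length vs \<ge> 2 \<and> distinct vs \<and> distinct es \<and>
        set vs \<subseteq> A \<and> set es \<subseteq> E \<and>
        (\<forall>i < length vs. ends (es ! i) = {vs ! i, vs ! ((i + 1) mod length vs)}))"

definition edge_cut :: "'v set \<Rightarrow> 'e set \<Rightarrow> ('e \<Rightarrow> 'v set) \<Rightarrow> 'v set \<Rightarrow> 'e set" where
  "edge_cut V E ends A = {e\<in>E. ends e \<inter> A \<noteq> {} \<and> ends e \<inter> (V - A) \<noteq> {}}"

definition cyclic_edge_cut :: "'v set \<Rightarrow> 'e set \<Rightarrow> ('e \<Rightarrow> 'v set) \<Rightarrow> 'v set \<Rightarrow> bool" where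
  "cyclic_edge_cut V E ends A \<longleftrightarrow> A \<subseteq> V \<and> has_cycle_in E ends A \<and> has_cycle_in E ends (V - A)"

definition cyclically_k_edge_connected :: "nat \<Rightarrow> 'v set \<Rightarrow> 'e set \<Rightarrow> ('e \<Rightarrow> 'v set) \<Rightarrow> bool" where
  "cyclically_k_edge_connected k V E ends \<longleftrightarrow>
     (\<forall>A. cyclic_edge_cut V E ends A \<longrightarrow> card (edge_cut V E ends A) \<ge> k)"

definition perfect_matching :: "'v set \<Rightarrow> 'e set \<Rightarrow> ('e \<Rightarrow> 'v set) \<Rightarrow> 'e set \<Rightarrow> bool" where
  "perfect_matching V E ends M \<longleftrightarrow> M \<subseteq> E \<and> (\<forall>v\<in>V. card {m\<in>M. v \<in> ends m} = 1)"

definition bipartition :: "'v set \<Rightarrow> 'e set \<Rightarrow> ('e \<Rightarrow> 'v set) \<Rightarrow> 'v set \<Rightarrow> bool" where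
  "bipartition V E ends X \<longleftrightarrow> X \<subseteq> V \<and>
     (\<forall>e\<in>E. card (ends e \<inter> X) = 1 \<and> card (ends e \<inter> (V - X)) = 1)"

end

theory Submission
  imports Defs
begin

definition pmf :: "'v set \<Rightarrow> ('v \<Rightarrow> 'v \<Rightarrow> bool) \<Rightarrow> ('v \<Rightarrow> 'v) \<Rightarrow> bool" where
  "pmf W adj m \<longleftrightarrow> (\<forall>v\<in>W. m v \<in> W \<and> m v \<noteq> v \<and> m (m v) = v \<and> adj v (m v))"

fun altw :: "('v\<Rightarrow>'v) \<Rightarrow> ('v\<Rightarrow>'v) \<Rightarrow> 'v \<Rightarrow> nat \<Rightarrow> 'v" where
  "altw m1 m2 d 0 = d"
| "altw m1 m2 d (Suc n) = (if even n then m1 else m2) (altw m1 m2 d n)"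

lemma altw_in:
  assumes "pmf W adj1 m1" "pmf W adj2 m2" "d \<in> W"
  shows "altw m1 m2 d n \<in> W"
  using assms by (induction n) (auto simp: pmf_def)

lemma altw_distinct:
  assumes p1: "pmf W adj1 m1" and p2: "pmf W adj2 m2" and dW: "d \<in> W"
    and nob: "\<forall>i<k. altw m1 m2 d i \<noteq> m2 d"
  shows "i < j \<Longrightarrow> j \<le> k \<Longrightarrow> altw m1 m2 d i \<noteq> altw m1 m2 d j"
proof (induction j arbitrary: i rule: less_induct)
  case (less j)
  let ?p = "altw m1 m2 d"
  have inW: "\<And>n. ?p n \<in> W" using altw_in[OF p1 p2 dW] .
  have m1i: "\<And>v. v \<in> W \<Longrightarrow> m1 (m1 v) = v" "\<And>v. v \<in> W \<Longrightarrow> m1 v \<noteq> v"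
    using p1 by (auto simp: pmf_def)
  have m2i: "\<And>v. v \<in> W \<Longrightarrow> m2 (m2 v) = v" "\<And>v. v \<in> W \<Longrightarrow> m2 v \<noteq> v"
    using p2 by (auto simp: pmf_def)
  show ?case
  proof
    assume eq: "?p i = ?p j"
    obtain j' where j': "j = Suc j'" using less.prems by (cases j) auto
    show False
    proof (cases i)
      case 0
      show False
      proof (cases "even j'")
        case True
        hence "?p j = m1 (?p j')" using j' by simp
        hence "m1 (?p j') = d" using eq 0 by simp
        hence pj': "?p j' = m1 d" using m1i inW dW by metis
        show False
        proof (cases j')
          case 0 thus False using pj' m1i(2)[OF dW] by simp
        next
          case (Suc j'')
          have "?p 1 = m1 d" by simp
          hence "?p 1 = ?p j'" using pj' by simp
          moreover have "1 < j'"
          proof -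
            have "j' \<noteq> 1" using True by auto
            thus ?thesis using Suc by simp
          qed
          ultimately show False using less.IH[of j' 1] j' less.prems by simp
        qed
      next
        case False
        hence "?p j = m2 (?p j')" using j' by simp
        hence "m2 (?p j') = d" using eq 0 by simp
        hence "?p j' = m2 d" using m2i inW dW by metis
        moreover have "j' < k" using j' less.prems by simp
        ultimately show False using nob by blast
      qed
    next
      case (Suc i')
      show False
      proof (cases "even i' = even j'")
        case True
        have "?p i = (if even i' then m1 else m2) (?p i')" using Suc by simp
        moreover have "?p j = (if even i' then m1 else m2) (?p j')" using j' True by simp
        ultimately have "(if even i' then m1 else m2) (?p i') = (if even i' then m1 else m2) (?p j')"
          using eq by simp
        hence "?p i' = ?p j'" using m1i m2i inW by (cases "even i'") metis+
        thus False using less.IH[of j' i'] j' Suc less.prems by simp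
      next
        case False
        note ne = False
        show False
        proof (cases "even i")
          case True
          have a: "?p (Suc i) = m1 (?p i)" using True by simp
          have pj: "even j'" using True ne Suc j' by simp
          hence b: "?p j = m1 (?p j')" using j' by simp
          have c: "?p j' = ?p (Suc i)"
          proof -
            have "?p j' = m1 (m1 (?p j'))" using m1i(1)[OF inW[of j']] by simp
            also have "\<dots> = m1 (?p j)" by (simp only: b)
            also have "\<dots> = m1 (?p i)" by (simp only: eq)
            also have "\<dots> = ?p (Suc i)" by (simp only: a)
            finally show ?thesis .
          qed
          have "Suc i \<noteq> j"
          proof
            assume h: "Suc i = j"
            have "?p j = ?p (Suc i)" by (simp only: h)
            also have "\<dots> = m1 (?p i)" by (rule a)
            also have "\<dots> = m1 (?p j)" by (simp only: eq)
            finally have "?p j = m1 (?p j)" .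
            thus False using m1i(2)[OF inW[of j]] by simp
          qed
          moreover have "Suc i \<noteq> j'" using pj True by auto
          ultimately have "Suc i < j'" using less.prems j' by simp
          thus False using less.IH[of j' "Suc i"] c j' less.prems by simp
        next
          case False
          have a: "?p (Suc i) = m2 (?p i)" using False by simp
          have pj: "odd j'" using False ne Suc j' by simp
          hence b: "?p j = m2 (?p j')" using j' by simp
          have c: "?p j' = ?p (Suc i)"
          proof -
            have "?p j' = m2 (m2 (?p j'))" using m2i(1)[OF inW[of j']] by simp
            also have "\<dots> = m2 (?p j)" by (simp only: b)
            also have "\<dots> = m2 (?p i)" by (simp only: eq)
            also have "\<dots> = ?p (Suc i)" by (simp only: a)
            finally show ?thesis .
          qed
          have "Suc i \<noteq> j"
          proof
            assume h: "Suc i = j"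
            have "?p j = ?p (Suc i)" by (simp only: h)
            also have "\<dots> = m2 (?p i)" by (rule a)
            also have "\<dots> = m2 (?p j)" by (simp only: eq)
            finally have "?p j = m2 (?p j)" .
            thus False using m2i(2)[OF inW[of j]] by simp
          qed
          moreover have "Suc i \<noteq> j'" using pj False by auto
          ultimately have "Suc i < j'" using less.prems j' by simp
          thus False using less.IH[of j' "Suc i"] c j' less.prems by simp
        qed
      qed
    qed
  qed
qed

lemma altw_step1: "even n \<Longrightarrow> altw m1 m2 d (Suc n) = m1 (altw m1 m2 d n)" by simp
lemma altw_step2: "odd n \<Longrightarrow> altw m1 m2 d (Suc n) = m2 (altw m1 m2 d n)" by simp

lemma swap_lemma:
  assumes sym: "\<And>u v. adj u v \<Longrightarrow> adj v u"
    and p1: "pmf W adj1 m1" and p2: "pmf W adj2 m2"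
    and h1: "\<And>u v. adj1 u v \<Longrightarrow> u \<notin> {a,c} \<Longrightarrow> adj u v"
    and h2: "\<And>u v. adj2 u v \<Longrightarrow> u \<notin> {b,d} \<Longrightarrow> adj u v"
    and m1a: "m1 a = c" and m2b: "m2 b = d"
    and W: "a \<in> W" "b \<in> W" "c \<in> W" "d \<in> W" and fin: "finite W"
    and ab: "adj a b" and cb: "adj c b" and bac: "b \<notin> {a,c}" and dac: "d \<notin> {a,c}"
  shows "\<exists>m. pmf W adj m"
proof -
  let ?p = "altw m1 m2 d"
  have inW: "\<And>n. ?p n \<in> W" using altw_in[OF p1 p2 W(4)] .
  have m1i: "\<And>v. v \<in> W \<Longrightarrow> m1 (m1 v) = v" "\<And>v. v \<in> W \<Longrightarrow> m1 v \<noteq> v"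
     "\<And>v. v \<in> W \<Longrightarrow> m1 v \<in> W" "\<And>v. v \<in> W \<Longrightarrow> adj1 v (m1 v)"
    using p1 by (auto simp: pmf_def)
  have m2i: "\<And>v. v \<in> W \<Longrightarrow> m2 (m2 v) = v" "\<And>v. v \<in> W \<Longrightarrow> m2 v \<noteq> v"
     "\<And>v. v \<in> W \<Longrightarrow> m2 v \<in> W" "\<And>v. v \<in> W \<Longrightarrow> adj2 v (m2 v)"
    using p2 by (auto simp: pmf_def)
  have m2d: "m2 d = b" using m2b m2i(1)[OF W(2)] by simp
  have m1c: "m1 c = a" using m1a m1i(1)[OF W(1)] by simp
  have bd: "b \<noteq> d" using m2b m2i(2)[OF W(2)] by simp
  have ex: "\<exists>k. ?p k \<in> {a,b,c}"
  proof (rule ccontr)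
    assume "\<not> ?thesis"
    hence nob: "\<forall>i<card W. ?p i \<noteq> m2 d" using m2d by auto
    have "inj_on ?p {..card W}"
    proof (rule inj_onI)
      fix i j assume "i \<in> {..card W}" "j \<in> {..card W}" "?p i = ?p j"
      show "i = j"
      proof (rule ccontr)
        assume "i \<noteq> j"
        thus False
        proof (rule linorder_neqE_nat)
          assume "i < j" thus False using altw_distinct[OF p1 p2 W(4) nob, of i j] \<open>?p i = ?p j\<close> \<open>j \<in> {..card W}\<close> by simp
        next
          assume "j < i" thus False using altw_distinct[OF p1 p2 W(4) nob, of j i] \<open>?p i = ?p j\<close> \<open>i \<in> {..card W}\<close> by simp
        qed
      qed
    qed
    hence "card (?p ` {..card W}) = Suc (card W)" by (simp add: card_image)
    moreover have "?p ` {..card W} \<subseteq> W" using inW by auto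
    moreover have "card (?p ` {..card W}) \<le> card W" by (rule card_mono[OF fin]) (use inW in auto)
    ultimately show False by simp
  qed
  define k where "k = (LEAST k. ?p k \<in> {a,b,c})"
  have pk: "?p k \<in> {a,b,c}" unfolding k_def using ex by (rule LeastI_ex)
  have before: "\<And>i. i < k \<Longrightarrow> ?p i \<notin> {a,b,c}" unfolding k_def using not_less_Least by blast
  have nob: "\<forall>i<k. ?p i \<noteq> m2 d" using before m2d by auto
  have dist: "\<And>i j. i < j \<Longrightarrow> j \<le> k \<Longrightarrow> ?p i \<noteq> ?p j"
    using altw_distinct[OF p1 p2 W(4) nob] by blast
  have k0: "k \<noteq> 0"
  proof
    assume "k = 0" hence "?p k = d" by simp
    thus False using pk dac bac bd by auto
  qed
  then obtain n where kn: "k = Suc n" by (cases k) auto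
  have inv1: "\<And>i. even i \<Longrightarrow> m1 (?p (Suc i)) = ?p i" using m1i(1)[OF inW] by simp
  have inv2: "\<And>i. odd i \<Longrightarrow> m2 (?p (Suc i)) = ?p i" using m2i(1)[OF inW] by simp
  show ?thesis
  proof (cases "?p k = b")
    case True
    have "even n"
    proof (rule ccontr)
      assume "odd n"
      hence "?p n = m2 b" using inv2[of n] True kn by simp
      hence "?p n = ?p 0" using m2b by simp
      moreover have "0 < n" using \<open>odd n\<close> by (cases n) auto
      ultimately show False using dist[of 0 n] kn by simp
    qed
    define P where "P = ?p ` {..k}"
    have inP: "\<And>j. j \<le> k \<Longrightarrow> ?p j \<in> P" unfolding P_def by blast
    have c1: "\<And>v. v \<in> P \<Longrightarrow> m1 v \<in> P"
    proof -
      fix v assume "v \<in> P"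
      then obtain i where i: "i \<le> k" "v = ?p i" unfolding P_def by auto
      show "m1 v \<in> P"
      proof (cases "even i")
        case True
        hence "i \<noteq> k" using kn \<open>even n\<close> by auto
        hence "Suc i \<le> k" using i by simp
        show ?thesis unfolding P_def
        proof (rule image_eqI[of _ _ "Suc i"])
          show "m1 v = ?p (Suc i)" using i True by simp
        qed (use \<open>Suc i \<le> k\<close> in simp)
      next
        case False
        then obtain i0 where i0: "i = Suc i0" by (cases i) auto
        hence "even i0" using False by simp
        hence "m1 v = ?p i0" using i i0 inv1[of i0] by simp
        moreover have "?p i0 \<in> P" using inP[of i0] i i0 by simp
        ultimately show ?thesis by (simp only:)
      qed
    qed
    have c2: "\<And>v. v \<in> P \<Longrightarrow> m2 v \<in> P"
    proof -
      fix v assume "v \<in> P"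
      then obtain i where i: "i \<le> k" "v = ?p i" unfolding P_def by auto
      show "m2 v \<in> P"
      proof (cases "i = k")
        case True
        hence "m2 v = ?p 0" using i \<open>?p k = b\<close> m2b by simp
        moreover have "?p 0 \<in> P" using inP[of 0] by simp
        ultimately show ?thesis by (simp only:)
      next
        case False
        show ?thesis
        proof (cases "odd i")
          case True
          hence "m2 v = ?p (Suc i)" using i by simp
          moreover have "?p (Suc i) \<in> P" using inP[of "Suc i"] False i by simp
          ultimately show ?thesis by (simp only:)
        next
          case ev: False
          show ?thesis
          proof (cases i)
            case 0
            hence "m2 v = ?p k" using i m2d \<open>?p k = b\<close> by simp
            moreover have "?p k \<in> P" using inP[of k] by simp
            ultimately show ?thesis by (simp only:)
          next
            case (Suc i0)
            hence "odd i0" using ev by simp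
            hence "m2 v = ?p i0" using inv2[of i0] i Suc by simp
            moreover have "?p i0 \<in> P" using inP[of i0] i Suc by simp
            ultimately show ?thesis by (simp only:)
          qed
        qed
      qed
    qed
    have acP: "a \<notin> P" "c \<notin> P"
    proof -
      have "\<And>i. i \<le> k \<Longrightarrow> ?p i \<notin> {a,c}"
      proof -
        fix i assume "i \<le> k"
        thus "?p i \<notin> {a,c}" using before[of i] True bac by (cases "i = k") auto
      qed
      thus "a \<notin> P" "c \<notin> P" unfolding P_def by auto
    qed
    have bdP: "b \<in> P" "d \<in> P" using inP[of 0] inP[of k] True by simp_all
    define m where "m = (\<lambda>v. if v \<in> P then m1 v else m2 v)"
    have "pmf W adj m"
      unfolding pmf_def
    proof
      fix v assume v: "v \<in> W"
      show "m v \<in> W \<and> m v \<noteq> v \<and> m (m v) = v \<and> adj v (m v)"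
      proof (cases "v \<in> P")
        case True
        have "v \<notin> {a,c}" using True acP by auto
        thus ?thesis using True c1[OF True] m1i[OF v] h1[OF m1i(4)[OF v]] unfolding m_def by auto
      next
        case False
        have "m2 v \<notin> P" using c2[of "m2 v"] m2i(1)[OF v] False by auto
        moreover have "v \<notin> {b,d}" using False bdP by auto
        ultimately show ?thesis using False m2i[OF v] h2[OF m2i(4)[OF v]] unfolding m_def by auto
      qed
    qed
    thus ?thesis by blast
  next
    case False
    with pk have pk': "?p k \<in> {a,c}" by auto
    define u where "u = ?p k"
    have "odd n"
    proof (rule ccontr)
      assume "\<not> odd n"
      hence "?p n = m1 u" using inv1[of n] kn u_def by simp
      hence "?p n \<in> {a,c}" using pk' m1a m1c u_def by auto
      thus False using before[of n] kn by auto
    qed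
    define P0 where "P0 = ?p ` {..<k}"
    have inP: "\<And>j. j < k \<Longrightarrow> ?p j \<in> P0" unfolding P0_def by blast
    have bP0: "b \<notin> P0" using before unfolding P0_def by auto
    have uP0: "u \<notin> P0"
    proof
      assume "u \<in> P0"
      then obtain i where "i < k" "u = ?p i" unfolding P0_def by auto
      thus False using dist[of i k] u_def by simp
    qed
    have ub: "u \<noteq> b" using False u_def by simp
    have acP: "a \<notin> P0" "c \<notin> P0" using before unfolding P0_def by auto
    have dP: "d \<in> P0" using inP[of 0] k0 by simp
    have c1: "\<And>v. v \<in> P0 \<Longrightarrow> m1 v \<in> P0"
    proof -
      fix v assume "v \<in> P0"
      then obtain i where i: "i < k" "v = ?p i" unfolding P0_def by auto
      show "m1 v \<in> P0"
      proof (cases "even i")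
        case True
        hence "Suc i \<noteq> k" using kn \<open>odd n\<close> by auto
        hence "Suc i < k" using i by simp
        show ?thesis unfolding P0_def
        proof (rule image_eqI[of _ _ "Suc i"])
          show "m1 v = ?p (Suc i)" using i True by simp
        qed (use \<open>Suc i < k\<close> in simp)
      next
        case False
        then obtain i0 where i0: "i = Suc i0" by (cases i) auto
        hence "even i0" using False by simp
        hence "m1 v = ?p i0" using i i0 inv1[of i0] by simp
        moreover have "?p i0 \<in> P0" using inP[of i0] i i0 by simp
        ultimately show ?thesis by (simp only:)
      qed
    qed
    have c2: "\<And>v. v \<in> P0 \<union> {u,b} \<Longrightarrow> m2 v \<in> P0 \<union> {u,b}"
    proof -
      fix v assume "v \<in> P0 \<union> {u,b}"
      then consider (P) "v \<in> P0" | (U) "v = u" | (B) "v = b" by auto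
      thus "m2 v \<in> P0 \<union> {u,b}"
      proof cases
        case U
        hence "m2 v = ?p n" using inv2[of n] \<open>odd n\<close> kn u_def by simp
        moreover have "?p n \<in> P0" using inP[of n] kn by simp
        ultimately show ?thesis by (metis UnI1)
      next
        case B
        thus ?thesis using m2b dP by simp
      next
        case P
        then obtain i where i: "i < k" "v = ?p i" unfolding P0_def by auto
        show ?thesis
        proof (cases "odd i")
          case True
          hence "m2 v = ?p (Suc i)" using i by simp
          moreover have "?p (Suc i) \<in> P0 \<union> {u,b}"
          proof (cases "Suc i = k")
            case True thus ?thesis using u_def by simp
          next
            case False thus ?thesis using inP[of "Suc i"] i by simp
          qed
          ultimately show ?thesis by (simp only:)
        next
          case ev: False
          show ?thesis
          proof (cases i)
            case 0
            hence "m2 v = b" using i m2d by simp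
            thus ?thesis by simp
          next
            case (Suc i0)
            hence "odd i0" using ev by simp
            hence "m2 v = ?p i0" using inv2[of i0] i Suc by simp
            moreover have "?p i0 \<in> P0" using inP[of i0] i Suc by simp
            ultimately show ?thesis by (metis UnI1)
          qed
        qed
      qed
    qed
    have adjub: "adj u b" using pk' ab cb u_def by auto
    define m where "m = (\<lambda>v. if v = u then b else if v = b then u else if v \<in> P0 then m1 v else m2 v)"
    have uW: "u \<in> W" using inW u_def by simp
    have "pmf W adj m"
      unfolding pmf_def
    proof
      fix v assume v: "v \<in> W"
      show "m v \<in> W \<and> m v \<noteq> v \<and> m (m v) = v \<and> adj v (m v)"
      proof (cases "v = u")
        case True
        thus ?thesis using ub adjub W(2) unfolding m_def by auto
      next
        case nu: False
        show ?thesis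
        proof (cases "v = b")
          case True
          thus ?thesis using ub adjub sym uW unfolding m_def by auto
        next
          case nb: False
          show ?thesis
          proof (cases "v \<in> P0")
            case True
            have "v \<notin> {a,c}" using True acP by auto
            moreover have "m1 v \<in> P0" using c1[OF True] .
            hence "m1 v \<noteq> u" "m1 v \<noteq> b" using uP0 bP0 by auto
            ultimately show ?thesis using True nu nb c1[OF True] m1i[OF v] h1[OF m1i(4)[OF v]] unfolding m_def by auto
          next
            case False
            have "m2 v \<notin> P0 \<union> {u,b}" using c2[of "m2 v"] m2i(1)[OF v] False nu nb by auto
            moreover have "v \<notin> {b,d}" using nb False dP by auto
            ultimately show ?thesis using False nu nb m2i[OF v] h2[OF m2i(4)[OF v]] unfolding m_def by auto
          qed
        qed
      qed
    qed
    thus ?thesis by blast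
  qed
qed

definition sep_part :: "'v set \<Rightarrow> ('v\<Rightarrow>'v\<Rightarrow>bool) \<Rightarrow> 'v set set \<Rightarrow> bool" where
  "sep_part U adj P \<longleftrightarrow> \<Union>P = U \<and> {} \<notin> P \<and> (\<forall>B1\<in>P. \<forall>B2\<in>P. B1 \<noteq> B2 \<longrightarrow> B1 \<inter> B2 = {}) \<and>
     (\<forall>B1\<in>P. \<forall>B2\<in>P. B1 \<noteq> B2 \<longrightarrow> (\<forall>x\<in>B1. \<forall>y\<in>B2. \<not> adj x y))"

definition tutte_cond :: "'v set \<Rightarrow> ('v\<Rightarrow>'v\<Rightarrow>bool) \<Rightarrow> bool" where
  "tutte_cond W adj \<longleftrightarrow> (\<forall>S P. S \<subseteq> W \<longrightarrow> sep_part (W - S) adj P \<longrightarrow> card {B\<in>P. odd (card B)} \<le> card S)"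

lemma pm_union:
  assumes disj: "\<forall>B1\<in>Q. \<forall>B2\<in>Q. B1 \<noteq> B2 \<longrightarrow> B1 \<inter> B2 = {}"
    and each: "\<forall>B\<in>Q. \<exists>m. pmf B adj m"
  shows "\<exists>m. pmf (\<Union>Q) adj m"
proof -
  from each obtain F where F: "\<forall>B\<in>Q. pmf B adj (F B)" by metis
  define blk where "blk v = (THE B. B \<in> Q \<and> v \<in> B)" for v
  have blk: "\<And>B v. B \<in> Q \<Longrightarrow> v \<in> B \<Longrightarrow> blk v = B"
    unfolding blk_def by (rule the_equality) (use disj in auto)
  define m where "m v = F (blk v) v" for v
  have "pmf (\<Union>Q) adj m" unfolding pmf_def
  proof
    fix v assume "v \<in> \<Union>Q"
    then obtain B where B: "B \<in> Q" "v \<in> B" by auto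
    have pB: "pmf B adj (F B)" using F B by auto
    have mv: "m v = F B v" using blk[OF B] m_def by simp
    have "F B v \<in> B" using pB B unfolding pmf_def by auto
    hence "m (m v) = F B (F B v)" using blk[OF B(1)] m_def mv by simp
    thus "m v \<in> \<Union>Q \<and> m v \<noteq> v \<and> m (m v) = v \<and> adj v (m v)"
      using pB B mv unfolding pmf_def by auto
  qed
  thus ?thesis by blast
qed

lemma pm_extend:
  assumes "pmf B adj m" "x \<notin> B" "y \<notin> B" "x \<noteq> y" "adj x y" "adj y x"
  shows "pmf (insert x (insert y B)) adj (m(x:=y, y:=x))"
proof -
  have "\<And>v. v \<in> B \<Longrightarrow> m v \<in> B" using assms(1) unfolding pmf_def by auto
  thus ?thesis using assms unfolding pmf_def by auto
qed

lemma clique_pm: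
  assumes "finite B" "even (card B)" "\<forall>x\<in>B. \<forall>y\<in>B. x \<noteq> y \<longrightarrow> adj x y"
  shows "\<exists>m. pmf B adj m"
  using assms
proof (induction "card B" arbitrary: B rule: less_induct)
  case less
  show ?case
  proof (cases "B = {}")
    case True thus ?thesis by (auto simp: pmf_def)
  next
    case False
    then obtain x where x: "x \<in> B" by auto
    have "card B \<noteq> 1" using less.prems(2) by auto
    have "B - {x} \<noteq> {}"
    proof
      assume "B - {x} = {}" hence "B = {x}" using x by auto
      thus False using \<open>card B \<noteq> 1\<close> by simp
    qed
    then obtain y where y: "y \<in> B" "y \<noteq> x" by auto
    let ?B = "B - {x,y}"
    have cB: "card ?B = card B - 2" using x y less.prems(1) by (simp add: card_Diff_subset)
    have "card {x,y} \<le> card B" by (rule card_mono) (use x y less.prems(1) in auto)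
    hence "card B \<ge> 2" using y by simp
    hence "card ?B < card B" "even (card ?B)" using cB less.prems(2) by auto
    then obtain m where m: "pmf ?B adj m"
      using less.hyps[of ?B] less.prems by auto
    have "pmf (insert x (insert y ?B)) adj (m(x:=y, y:=x))"
      by (rule pm_extend[OF m]) (use x y less.prems(3) in auto)
    moreover have "insert x (insert y ?B) = B" using x y by auto
    ultimately show ?thesis by auto
  qed
qed

lemma build_trans:
  assumes fin: "finite W" and UW: "U \<subseteq> W" and sym: "\<And>u v. adj u v \<Longrightarrow> adj v u"
    and univ: "\<forall>u\<in>U. \<forall>w\<in>W. u \<noteq> w \<longrightarrow> adj u w"
    and tr: "\<forall>x\<in>W-U. \<forall>y\<in>W-U. \<forall>z\<in>W-U. adj x y \<longrightarrow> adj y z \<longrightarrow> x \<noteq> z \<longrightarrow> adj x z"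
    and tc: "tutte_cond W adj" and ev: "even (card W)"
  shows "\<exists>m. pmf W adj m"
proof -
  define cl where "cl x = {y\<in>W-U. x = y \<or> adj x y}" for x
  define P where "P = cl ` (W - U)"
  have self: "\<And>x. x \<in> W - U \<Longrightarrow> x \<in> cl x" unfolding cl_def by auto
  have rel: "\<And>x y z. x \<in> W-U \<Longrightarrow> y \<in> cl x \<Longrightarrow> z \<in> cl x \<Longrightarrow> y \<noteq> z \<Longrightarrow> adj y z"
  proof -
    fix x y z assume x: "x \<in> W-U" and y: "y \<in> cl x" and z: "z \<in> cl x" and yz: "y \<noteq> z"
    have yW: "y \<in> W-U" and zW: "z \<in> W-U" using y z unfolding cl_def by auto
    show "adj y z"
    proof (cases "x = y")
      case True thus ?thesis using z yz unfolding cl_def by auto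
    next
      case False
      hence xy: "adj x y" using y unfolding cl_def by auto
      show ?thesis
      proof (cases "x = z")
        case True thus ?thesis using xy sym by auto
      next
        case False
        hence "adj x z" using z unfolding cl_def by auto
        moreover have "adj y x" using sym[OF xy] .
        ultimately show ?thesis using tr x yW zW yz by blast
      qed
    qed
  qed
  have same: "\<And>x y. x \<in> W-U \<Longrightarrow> y \<in> cl x \<Longrightarrow> cl y = cl x"
  proof -
    fix x y assume x: "x \<in> W-U" and y: "y \<in> cl x"
    have yW: "y \<in> W-U" using y unfolding cl_def by auto
    show "cl y = cl x"
    proof
      show "cl y \<subseteq> cl x"
      proof
        fix z assume z: "z \<in> cl y"
        have zW: "z \<in> W-U" using z unfolding cl_def by auto
        show "z \<in> cl x"
        proof (cases "z = x")
          case True thus ?thesis using self x by simp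
        next
          case False
          have "adj x z"
          proof (cases "z = y")
            case True thus ?thesis using y False unfolding cl_def by auto
          next
            case False
            hence yz: "adj y z" using z unfolding cl_def by auto
            have "x = y \<or> adj x y" using y unfolding cl_def by auto
            thus ?thesis
            proof
              assume "x = y" thus ?thesis using yz by simp
            next
              assume xy: "adj x y"
              have "x \<noteq> z" using \<open>z \<noteq> x\<close> by simp
              thus ?thesis using tr x yW zW xy yz by blast
            qed
          qed
          thus ?thesis using zW unfolding cl_def by auto
        qed
      qed
    next
      show "cl x \<subseteq> cl y"
      proof
        fix z assume z: "z \<in> cl x"
        have zW: "z \<in> W-U" using z unfolding cl_def by auto
        show "z \<in> cl y"
          using rel[OF x y z] zW unfolding cl_def by auto
      qed
    qed
  qed
  have finP: "finite P" unfolding P_def using fin by auto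
  have Psub: "\<And>B. B \<in> P \<Longrightarrow> B \<subseteq> W - U" unfolding P_def cl_def by auto
  have finB: "\<And>B. B \<in> P \<Longrightarrow> finite B" using Psub fin by (meson finite_Diff finite_subset)
  have disjP: "\<forall>B1\<in>P. \<forall>B2\<in>P. B1 \<noteq> B2 \<longrightarrow> B1 \<inter> B2 = {}"
  proof (intro ballI impI)
    fix B1 B2 assume "B1 \<in> P" "B2 \<in> P" "B1 \<noteq> B2"
    then obtain x1 x2 where x: "x1 \<in> W-U" "x2 \<in> W-U" "B1 = cl x1" "B2 = cl x2" unfolding P_def by auto
    show "B1 \<inter> B2 = {}"
    proof (rule ccontr)
      assume "B1 \<inter> B2 \<noteq> {}"
      then obtain z where z: "z \<in> cl x1" "z \<in> cl x2" using x by auto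
      have "cl z = cl x1" using same[OF x(1) z(1)] .
      moreover have "cl z = cl x2" using same[OF x(2) z(2)] .
      ultimately have "cl x1 = cl x2" by simp
      thus False using x \<open>B1 \<noteq> B2\<close> by simp
    qed
  qed
  have clique: "\<And>B x y. B \<in> P \<Longrightarrow> x \<in> B \<Longrightarrow> y \<in> B \<Longrightarrow> x \<noteq> y \<Longrightarrow> adj x y"
    unfolding P_def using rel by blast
  have sp: "sep_part (W - U) adj P"
    unfolding sep_part_def
  proof (intro conjI)
    show "\<Union>P = W - U" using self Psub unfolding P_def by blast
    show "{} \<notin> P" using self unfolding P_def by blast
    show "\<forall>B1\<in>P. \<forall>B2\<in>P. B1 \<noteq> B2 \<longrightarrow> B1 \<inter> B2 = {}" by (rule disjP)
    show "\<forall>B1\<in>P. \<forall>B2\<in>P. B1 \<noteq> B2 \<longrightarrow> (\<forall>x\<in>B1. \<forall>y\<in>B2. \<not> adj x y)"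
    proof (intro ballI impI)
      fix B1 B2 x y assume B: "B1 \<in> P" "B2 \<in> P" "B1 \<noteq> B2" and xy: "x \<in> B1" "y \<in> B2"
      show "\<not> adj x y"
      proof
        assume a: "adj x y"
        obtain x1 where x1: "x1 \<in> W-U" "B1 = cl x1" using B unfolding P_def by auto
        obtain x2 where x2: "x2 \<in> W-U" "B2 = cl x2" using B unfolding P_def by auto
        have xW: "x \<in> W-U" "y \<in> W-U" using xy Psub B by auto
        have "y \<in> cl x" using a xW unfolding cl_def by auto
        hence "cl y = cl x" using same xW by blast
        moreover have "cl x = B1" using same x1 xy by blast
        moreover have "cl y = B2" using same x2 xy by blast
        ultimately show False using B by simp
      qed
    qed
  qed
  define Od where "Od = {B\<in>P. odd (card B)}"
  have cO: "card Od \<le> card U" using tc sp UW unfolding tutte_cond_def Od_def by blast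
  have finU: "finite U" using UW fin finite_subset by blast
  have finO: "finite Od" using finP unfolding Od_def by auto
  obtain phi where phi: "phi ` Od \<subseteq> U" "inj_on phi Od" using card_le_inj[OF finO finU cO] by blast
  define f where "f B = (if odd (card B) then insert (phi B) B else B)" for B
  define Q where "Q = f ` P \<union> {U - phi ` Od}"
  have phiB: "\<And>B. B \<in> P \<Longrightarrow> odd (card B) \<Longrightarrow> phi B \<in> U" using phi unfolding Od_def by auto
  have BU: "\<And>B. B \<in> P \<Longrightarrow> B \<inter> U = {}" using Psub by auto
  have QW: "\<Union>Q = W"
  proof
    show "\<Union>Q \<subseteq> W" unfolding Q_def f_def using Psub phiB UW by auto
    show "W \<subseteq> \<Union>Q"
    proof
      fix w assume w: "w \<in> W"
      show "w \<in> \<Union>Q"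
      proof (cases "w \<in> U")
        case True
        show ?thesis
        proof (cases "w \<in> phi ` Od")
          case True
          then obtain B where "B \<in> Od" "w = phi B" by auto
          hence "w \<in> f B" "B \<in> P" unfolding f_def Od_def by auto
          thus ?thesis unfolding Q_def by auto
        next
          case False thus ?thesis using \<open>w \<in> U\<close> unfolding Q_def by auto
        qed
      next
        case False
        hence "w \<in> cl w" "cl w \<in> P" using self w unfolding P_def by auto
        hence "w \<in> f (cl w)" "cl w \<in> P" unfolding f_def by auto
        thus ?thesis unfolding Q_def by auto
      qed
    qed
  qed
  have disjQ: "\<forall>B1\<in>Q. \<forall>B2\<in>Q. B1 \<noteq> B2 \<longrightarrow> B1 \<inter> B2 = {}"
  proof (intro ballI impI)
    fix B1 B2 assume B: "B1 \<in> Q" "B2 \<in> Q" "B1 \<noteq> B2"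
    have fU: "\<And>B. B \<in> P \<Longrightarrow> f B \<inter> (U - phi ` Od) = {}"
      using BU unfolding f_def Od_def by auto
    show "B1 \<inter> B2 = {}"
    proof (cases "B1 = U - phi ` Od")
      case True
      hence "B2 \<in> f ` P" using B unfolding Q_def by auto
      thus ?thesis using fU True by auto
    next
      case n1: False
      then obtain C1 where C1: "C1 \<in> P" "B1 = f C1" using B unfolding Q_def by auto
      show ?thesis
      proof (cases "B2 = U - phi ` Od")
        case True thus ?thesis using fU C1 by auto
      next
        case False
        then obtain C2 where C2: "C2 \<in> P" "B2 = f C2" using B unfolding Q_def by auto
        have "C1 \<noteq> C2" using B C1 C2 by auto
        hence d: "C1 \<inter> C2 = {}" using disjP C1 C2 by auto
        have e1: "odd (card C1) \<Longrightarrow> phi C1 \<notin> C2" using phiB C1 BU C2 by auto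
        have e2: "odd (card C2) \<Longrightarrow> phi C2 \<notin> C1" using phiB C2 BU C1 by auto
        have e3: "odd (card C1) \<Longrightarrow> odd (card C2) \<Longrightarrow> phi C1 \<noteq> phi C2"
          using phi(2) C1 C2 \<open>C1 \<noteq> C2\<close> unfolding Od_def inj_on_def by auto
        show ?thesis using C1 C2 d e1 e2 e3 unfolding f_def by auto
      qed
    qed
  qed
  have eachQ: "\<forall>B\<in>Q. \<exists>m. pmf B adj m"
  proof
    fix B assume "B \<in> Q"
    then consider (R) "B = U - phi ` Od" | (P) C where "C \<in> P" "B = f C" unfolding Q_def by auto
    thus "\<exists>m. pmf B adj m"
    proof cases
      case R
      have "card (phi ` Od) = card Od" using phi(2) by (simp add: card_image)
      hence cR: "card B = card U - card Od" using R phi(1) finU by (simp add: card_Diff_subset finite_subset)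
      have "card (W - U) = card W - card U" using card_Diff_subset[OF finU UW] .
      moreover have "card U \<le> card W" using card_mono[OF fin UW] .
      ultimately have "card W = card U + card (W - U)" by simp
      moreover have "card (W - U) = sum card P"
      proof -
        have "card (\<Union>P) = sum card P"
          by (rule card_Union_disjoint) (use disjP finB in \<open>auto simp: pairwise_def disjnt_def\<close>)
        moreover have "\<Union>P = W - U" using sp unfolding sep_part_def by auto
        ultimately show ?thesis by simp
      qed
      moreover have "even (sum card P) = even (card Od)" unfolding Od_def using even_sum_iff[OF finP] by simp
      ultimately have "even (card B)" using cR ev cO by presburger
      moreover have "\<forall>x\<in>B. \<forall>y\<in>B. x \<noteq> y \<longrightarrow> adj x y" using R univ UW by auto
      moreover have "finite B" using R finU by auto
      ultimately show ?thesis using clique_pm by blast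
    next
      case (P C)
      have fC: "finite C" using finB P by auto
      show ?thesis
      proof (cases "odd (card C)")
        case True
        have pU: "phi C \<in> U" "phi C \<notin> C" using phiB P True BU by auto
        have "card B = Suc (card C)" using P True pU fC unfolding f_def by simp
        hence "even (card B)" using True by simp
        moreover have "\<forall>x\<in>B. \<forall>y\<in>B. x \<noteq> y \<longrightarrow> adj x y"
        proof (intro ballI impI)
          fix x y assume "x \<in> B" "y \<in> B" "x \<noteq> y"
          hence "x = phi C \<or> x \<in> C" "y = phi C \<or> y \<in> C" using P True unfolding f_def by auto
          moreover have "C \<subseteq> W" using Psub P by auto
          ultimately show "adj x y"
          proof (elim disjE)
            assume "x = phi C" "y = phi C" thus ?thesis using \<open>x \<noteq> y\<close> by simp
          next
            assume h: "x = phi C" "y \<in> C" "C \<subseteq> W"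
            hence "y \<in> W" by blast
            thus ?thesis using univ pU(1) h(1) \<open>x \<noteq> y\<close> by simp
          next
            assume h: "x \<in> C" "y = phi C" "C \<subseteq> W"
            hence "x \<in> W" by blast
            hence "adj y x" using univ pU(1) h(2) \<open>x \<noteq> y\<close> by simp
            thus ?thesis by (rule sym)
          next
            assume "x \<in> C" "y \<in> C" thus ?thesis using clique[OF P(1)] \<open>x \<noteq> y\<close> by blast
          qed
        qed
        moreover have "finite B" using P fC unfolding f_def by auto
        ultimately show ?thesis using clique_pm by blast
      next
        case False
        hence "B = C" using P unfolding f_def by simp
        thus ?thesis using clique_pm[of C adj] fC False clique[OF P(1)] by blast
      qed
    qed
  qed
  show ?thesis using pm_union[OF disjQ eachQ] QW by simp
qed

lemma tutte_mono:
  assumes "tutte_cond W adj" "\<And>u v. adj u v \<Longrightarrow> adj' u v"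
  shows "tutte_cond W adj'"
  unfolding tutte_cond_def
proof (intro allI impI)
  fix S P assume S: "S \<subseteq> W" and sp: "sep_part (W - S) adj' P"
  have "sep_part (W - S) adj P" unfolding sep_part_def
  proof (intro conjI ballI impI)
    show "\<Union>P = W - S" "{} \<notin> P" using sp unfolding sep_part_def by auto
    show "\<And>B1 B2. B1 \<in> P \<Longrightarrow> B2 \<in> P \<Longrightarrow> B1 \<noteq> B2 \<Longrightarrow> B1 \<inter> B2 = {}"
      using sp unfolding sep_part_def by auto
    fix B1 B2 x y assume h: "B1 \<in> P" "B2 \<in> P" "B1 \<noteq> B2" "x \<in> B1" "y \<in> B2"
    hence "\<not> adj' x y" using sp unfolding sep_part_def by auto
    thus "\<not> adj x y" using assms(2)[of x y] by auto
  qed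
  thus "card {B\<in>P. odd (card B)} \<le> card S" using assms(1) S unfolding tutte_cond_def by blast
qed

definition nonedges :: "'v set \<Rightarrow> ('v\<Rightarrow>'v\<Rightarrow>bool) \<Rightarrow> nat" where
  "nonedges W adj = card {(u,v). u \<in> W \<and> v \<in> W \<and> u \<noteq> v \<and> \<not> adj u v}"

lemma nonedges_less:
  assumes fin: "finite W" and a: "a \<in> W" "c \<in> W" "a \<noteq> c" "\<not> adj a c"
  shows "nonedges W (\<lambda>u v. adj u v \<or> (u = a \<and> v = c) \<or> (u = c \<and> v = a)) < nonedges W adj"
proof -
  let ?A = "{(u,v). u \<in> W \<and> v \<in> W \<and> u \<noteq> v \<and> \<not> adj u v}"
  let ?B = "{(u,v). u \<in> W \<and> v \<in> W \<and> u \<noteq> v \<and> \<not> (adj u v \<or> (u = a \<and> v = c) \<or> (u = c \<and> v = a))}"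
  have "?B \<subseteq> ?A" by auto
  moreover have "(a,c) \<in> ?A" "(a,c) \<notin> ?B" using a by auto
  moreover have "finite ?A"
    by (rule finite_subset[of _ "W \<times> W"]) (use fin in auto)
  ultimately have "?B \<subset> ?A" "finite ?A" by auto
  hence "card ?B < card ?A" by (intro psubset_card_mono) auto
  thus ?thesis unfolding nonedges_def by simp
qed

theorem tutte:
  assumes "finite W" "\<And>u v. adj u v \<Longrightarrow> adj v u" "tutte_cond W adj"
  shows "\<exists>m. pmf W adj m"
  using assms
proof (induction "nonedges W adj" arbitrary: adj rule: less_induct)
  case less
  note fin = less.prems(1) and sym = less.prems(2) and tc = less.prems(3)
  have ev: "even (card W)"
  proof (cases "W = {}")
    case True thus ?thesis by simp
  next
    case False
    have "sep_part (W - {}) adj {W}" using False unfolding sep_part_def by auto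
    hence "card {B\<in>{W}. odd (card B)} \<le> card ({}::'a set)" using tc unfolding tutte_cond_def by blast
    thus ?thesis by (cases "odd (card W)") auto
  qed
  define U where "U = {u\<in>W. \<forall>w\<in>W. u \<noteq> w \<longrightarrow> adj u w}"
  have UW: "U \<subseteq> W" unfolding U_def by auto
  have univ: "\<forall>u\<in>U. \<forall>w\<in>W. u \<noteq> w \<longrightarrow> adj u w" unfolding U_def by auto
  show ?case
  proof (cases "\<forall>x\<in>W-U. \<forall>y\<in>W-U. \<forall>z\<in>W-U. adj x y \<longrightarrow> adj y z \<longrightarrow> x \<noteq> z \<longrightarrow> adj x z")
    case True
    show ?thesis by (rule build_trans[OF fin UW sym univ True tc ev])
  next
    case False
    then obtain a b c where abc: "a \<in> W-U" "b \<in> W-U" "c \<in> W-U" "adj a b" "adj b c" "a \<noteq> c" "\<not> adj a c"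
      by blast
    have ba: "b \<noteq> a" using abc by auto
    have bc: "b \<noteq> c" using abc by auto
    obtain d where d: "d \<in> W" "b \<noteq> d" "\<not> adj b d" using abc(2) unfolding U_def by auto
    have da: "d \<noteq> a" using d abc(4) sym by auto
    have dc: "d \<noteq> c" using d abc(5) by auto
    define adj1 where "adj1 = (\<lambda>u v. adj u v \<or> (u = a \<and> v = c) \<or> (u = c \<and> v = a))"
    define adj2 where "adj2 = (\<lambda>u v. adj u v \<or> (u = b \<and> v = d) \<or> (u = d \<and> v = b))"
    have lt1: "nonedges W adj1 < nonedges W adj" unfolding adj1_def
      by (rule nonedges_less) (use fin abc in auto)
    have lt2: "nonedges W adj2 < nonedges W adj" unfolding adj2_def
      by (rule nonedges_less) (use fin abc d in auto)
    have sym1: "\<And>u v. adj1 u v \<Longrightarrow> adj1 v u" unfolding adj1_def using sym by blast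
    have sym2: "\<And>u v. adj2 u v \<Longrightarrow> adj2 v u" unfolding adj2_def using sym by blast
    have tc1: "tutte_cond W adj1" by (rule tutte_mono[OF tc]) (simp add: adj1_def)
    have tc2: "tutte_cond W adj2" by (rule tutte_mono[OF tc]) (simp add: adj2_def)
    obtain m1 where m1: "pmf W adj1 m1" using less.hyps[OF lt1 fin sym1 tc1] by blast
    obtain m2 where m2: "pmf W adj2 m2" using less.hyps[OF lt2 fin sym2 tc2] by blast
    show ?thesis
    proof (cases "pmf W adj m1")
      case True thus ?thesis by blast
    next
      case nm1: False
      have m1a: "m1 a = c"
      proof -
        obtain v where v: "v \<in> W" "\<not> adj v (m1 v)" using nm1 m1 unfolding pmf_def by blast
        have "adj1 v (m1 v)" "m1 (m1 v) = v" using m1 v unfolding pmf_def by auto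
        hence "(v = a \<and> m1 v = c) \<or> (v = c \<and> m1 v = a)" using v unfolding adj1_def by auto
        thus ?thesis using \<open>m1 (m1 v) = v\<close> by auto
      qed
      show ?thesis
      proof (cases "pmf W adj m2")
        case True thus ?thesis by blast
      next
        case nm2: False
        have m2b: "m2 b = d"
        proof -
          obtain v where v: "v \<in> W" "\<not> adj v (m2 v)" using nm2 m2 unfolding pmf_def by blast
          have "adj2 v (m2 v)" "m2 (m2 v) = v" using m2 v unfolding pmf_def by auto
          hence "(v = b \<and> m2 v = d) \<or> (v = d \<and> m2 v = b)" using v unfolding adj2_def by auto
          thus ?thesis using \<open>m2 (m2 v) = v\<close> by auto
        qed
        show ?thesis
        proof (rule swap_lemma[OF _ m1 m2 _ _ m1a m2b])
          show "\<And>u v. adj u v \<Longrightarrow> adj v u" by (rule sym)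
          show "\<And>u v. adj1 u v \<Longrightarrow> u \<notin> {a, c} \<Longrightarrow> adj u v" unfolding adj1_def by auto
          show "\<And>u v. adj2 u v \<Longrightarrow> u \<notin> {b, d} \<Longrightarrow> adj u v" unfolding adj2_def by auto
          show "a \<in> W" "b \<in> W" "c \<in> W" "d \<in> W" "finite W" using abc d fin by auto
          show "adj a b" by (rule abc(4))
          show "adj c b" using sym[OF abc(5)] .
          show "b \<notin> {a, c}" using ba bc by auto
          show "d \<notin> {a, c}" using da dc by auto
        qed
      qed
    qed
  qed
qed

lemma sum_indicator_card:
  assumes "finite A"
  shows "(\<Sum>x\<in>A. if Q x then (1::nat) else 0) = card {x\<in>A. Q x}"
  using sum.inter_filter[OF assms, of "\<lambda>_. (1::nat)" Q] by simp

lemma double_count: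
  assumes "finite A" "finite F"
  shows "(\<Sum>v\<in>A. card {g\<in>F. v \<in> ends g}) = (\<Sum>g\<in>F. card (ends g \<inter> A))"
proof -
  have "(\<Sum>v\<in>A. card {g\<in>F. v \<in> ends g}) = (\<Sum>v\<in>A. \<Sum>g\<in>F. if v \<in> ends g then 1 else 0)"
  proof (rule sum.cong)
    fix v assume "v \<in> A"
    show "card {g\<in>F. v \<in> ends g} = (\<Sum>g\<in>F. if v \<in> ends g then 1 else 0)"
      using sum_indicator_card[OF assms(2)] by simp
  qed simp
  also have "\<dots> = (\<Sum>g\<in>F. \<Sum>v\<in>A. if v \<in> ends g then 1 else 0)" by (rule sum.swap)
  also have "\<dots> = (\<Sum>g\<in>F. card (ends g \<inter> A))"
  proof (rule sum.cong)
    fix g assume "g \<in> F"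
    have "ends g \<inter> A = {v\<in>A. v \<in> ends g}" by auto
    thus "(\<Sum>v\<in>A. if v \<in> ends g then 1 else 0) = card (ends g \<inter> A)"
      using sum_indicator_card[OF assms(1), of "\<lambda>v. v \<in> ends g"] by simp
  qed simp
  finally show ?thesis .
qed

definition inn :: "'e set \<Rightarrow> ('e \<Rightarrow> 'v set) \<Rightarrow> 'v set \<Rightarrow> nat" where
  "inn E ends A = card {g\<in>E. ends g \<subseteq> A}"

lemma degree_sum:
  assumes cub: "cubic V E ends" and AV: "A \<subseteq> V"
  shows "3 * card A = 2 * inn E ends A + card (edge_cut V E ends A)"
proof -
  have mg: "multigraph V E ends" and deg: "\<forall>v\<in>V. degree E ends v = 3"
    using cub unfolding cubic_def by auto
  have finV: "finite V" and finE: "finite E" and eg: "\<forall>g\<in>E. card (ends g) = 2 \<and> ends g \<subseteq> V"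
    using mg unfolding multigraph_def by auto
  have finA: "finite A" using finV AV finite_subset by blast
  have "(\<Sum>v\<in>A. degree E ends v) = (\<Sum>v\<in>A. 3)" by (rule sum.cong) (use deg AV in auto)
  hence "3 * card A = (\<Sum>v\<in>A. degree E ends v)" by simp
  also have "\<dots> = (\<Sum>g\<in>E. card (ends g \<inter> A))"
    unfolding degree_def by (rule double_count[OF finA finE])
  also have "\<dots> = (\<Sum>g\<in>E. 2 * (if ends g \<subseteq> A then 1 else 0) + (if g \<in> edge_cut V E ends A then 1 else 0))"
  proof (rule sum.cong)
    fix g assume g: "g \<in> E"
    then obtain p q where pq: "ends g = {p,q}" "p \<noteq> q" using eg by (meson card_2_iff)
    have pqV: "p \<in> V" "q \<in> V" using eg g pq by auto
    show "card (ends g \<inter> A) = 2 * (if ends g \<subseteq> A then 1 else 0) + (if g \<in> edge_cut V E ends A then 1 else 0)"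
      using pq pqV g unfolding edge_cut_def by (cases "p \<in> A"; cases "q \<in> A") auto
  qed simp
  also have "\<dots> = 2 * (\<Sum>g\<in>E. if ends g \<subseteq> A then 1 else 0) + (\<Sum>g\<in>E. if g \<in> edge_cut V E ends A then 1 else 0)"
    by (simp add: sum.distrib sum_distrib_left)
  also have "\<dots> = 2 * inn E ends A + card (edge_cut V E ends A)"
  proof -
    have "(\<Sum>g\<in>E. if g \<in> edge_cut V E ends A then (1::nat) else 0) = card {g\<in>E. g \<in> edge_cut V E ends A}"
      by (rule sum_indicator_card[OF finE])
    moreover have "{g\<in>E. g \<in> edge_cut V E ends A} = edge_cut V E ends A" unfolding edge_cut_def by auto
    ultimately show ?thesis unfolding inn_def using sum_indicator_card[OF finE] by simp
  qed
  finally show ?thesis .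
qed

lemma card2_other:
  assumes "card S = 2" "a \<in> S"
  shows "\<exists>b. b \<noteq> a \<and> S = {a,b}"
proof -
  obtain p q where pq: "S = {p,q}" "p \<noteq> q" using assms(1) by (meson card_2_iff)
  show ?thesis
  proof (cases "a = p")
    case True thus ?thesis using pq by auto
  next
    case False hence "a = q" using pq assms(2) by auto
    thus ?thesis using pq by auto
  qed
qed

lemma has_cycle_mono:
  assumes "has_cycle_in E ends A" "A \<subseteq> B"
  shows "has_cycle_in E ends B"
  using assms unfolding has_cycle_in_def by blast

definition ipath :: "'e set \<Rightarrow> ('e \<Rightarrow> 'v set) \<Rightarrow> 'v set \<Rightarrow> 'v list \<Rightarrow> 'e list \<Rightarrow> bool" where
  "ipath E ends A vs es \<longleftrightarrow> length vs = Suc (length es) \<and> distinct vs \<and> distinct es \<and>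
     set vs \<subseteq> A \<and> set es \<subseteq> E \<and> (\<forall>i<length es. ends (es!i) = {vs!i, vs!Suc i})"

lemma mindeg_cycle:
  assumes finA: "finite A" and ne: "A \<noteq> {}" and eg: "\<forall>g\<in>E. card (ends g) = 2" and finE: "finite E"
    and deg2: "\<forall>v\<in>A. 2 \<le> card {g\<in>E. v \<in> ends g \<and> ends g \<subseteq> A}"
  shows "has_cycle_in E ends A"
proof (rule ccontr)
  assume nc: "\<not> has_cycle_in E ends A"
  have "\<exists>vs es. length es = n \<and> ipath E ends A vs es" for n
  proof (induction n)
    case 0
    obtain v where "v \<in> A" using ne by auto
    hence "ipath E ends A [v] []" unfolding ipath_def by auto
    thus ?case by blast
  next
    case (Suc n)
    then obtain vs es where P: "length es = n" "ipath E ends A vs es" by blast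
    have lv: "length vs = Suc n" and dv: "distinct vs" and de: "distinct es" and sv: "set vs \<subseteq> A"
      and se: "set es \<subseteq> E" and en: "\<forall>i<length es. ends (es!i) = {vs!i, vs!Suc i}"
      using P unfolding ipath_def by auto
    obtain v0 rest where vs: "vs = v0 # rest" using lv by (cases vs) auto
    have v0A: "v0 \<in> A" using sv vs by auto
    define D where "D = {g\<in>E. v0 \<in> ends g \<and> ends g \<subseteq> A}"
    have "2 \<le> card D" using deg2 v0A unfolding D_def by auto
    hence "D - {es!0} \<noteq> {}"
    proof -
      assume c: "2 \<le> card D"
      show "D - {es!0} \<noteq> {}"
      proof
        assume "D - {es!0} = {}"
        hence "D \<subseteq> {es!0}" by auto
        hence "card D \<le> card {es!0}" by (intro card_mono) auto
        hence "card D \<le> 1" by simp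
        thus False using c by simp
      qed
    qed
    then obtain g where g: "g \<in> D" "g \<noteq> es!0" by auto
    have gE: "g \<in> E" "v0 \<in> ends g" "ends g \<subseteq> A" using g unfolding D_def by auto
    obtain w where w: "w \<noteq> v0" "ends g = {v0, w}" using card2_other[of "ends g" v0] eg gE by auto
    have wA: "w \<in> A" using w gE by auto
    show ?case
    proof (cases "w \<in> set vs")
      case False
      have gnot: "g \<notin> set es"
      proof
        assume "g \<in> set es"
        then obtain i where i: "i < length es" "es!i = g" by (auto simp: in_set_conv_nth)
        hence "w \<in> {vs!i, vs!Suc i}" using en w by auto
        moreover have "i < length vs" "Suc i < length vs" using i lv P(1) by auto
        ultimately show False using False nth_mem[of i vs] nth_mem[of "Suc i" vs] by auto
      qed
      have "ipath E ends A (w # vs) (g # es)"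
        unfolding ipath_def
      proof (intro conjI)
        show "\<forall>i<length (g # es). ends ((g # es) ! i) = {(w # vs) ! i, (w # vs) ! Suc i}"
        proof (intro allI impI)
          fix i assume "i < length (g # es)"
          show "ends ((g # es) ! i) = {(w # vs) ! i, (w # vs) ! Suc i}"
          proof (cases i)
            case 0 thus ?thesis using w vs by auto
          next
            case (Suc i') thus ?thesis using en \<open>i < length (g # es)\<close> by auto
          qed
        qed
      qed (use lv P(1) False dv gnot de wA sv gE se in auto)
      thus ?thesis using P(1) by (intro exI[of _ "w # vs"] exI[of _ "g # es"]) simp
    next
      case True
      then obtain j where j: "j < length vs" "vs!j = w" by (auto simp: in_set_conv_nth)
      have j0: "j \<noteq> 0"
      proof
        assume "j = 0" hence "w = v0" using j vs by simp
        thus False using w by simp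
      qed
      define vs' where "vs' = take (Suc j) vs"
      define es' where "es' = take j es @ [g]"
      have jn: "j \<le> n" using j lv by simp
      have lvs': "length vs' = Suc j" unfolding vs'_def using j by simp
      have les': "length es' = Suc j" unfolding es'_def using jn P(1) by simp
      have gnot: "g \<notin> set (take j es)"
      proof
        assume "g \<in> set (take j es)"
        then obtain i where i: "i < j" "es!i = g" using jn P(1) by (auto simp: in_set_conv_nth)
        have "i < length es" using i jn P(1) by simp
        hence "v0 \<in> {vs!i, vs!Suc i}" using en i gE by auto
        moreover have "vs!0 = v0" using vs by simp
        moreover have "Suc i < length vs" "0 < length vs" using i jn lv by auto
        ultimately have "i = 0"
        proof -
          assume a: "v0 \<in> {vs!i, vs!Suc i}" "vs!0 = v0" "Suc i < length vs" "0 < length vs"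
          have ii: "i < length vs" using a(3) by simp
          show "i = 0"
          proof (cases "v0 = vs!i")
            case True
            hence "vs!i = vs!0" using a(2) by simp
            thus ?thesis using nth_eq_iff_index_eq[OF dv ii a(4)] by simp
          next
            case False
            hence "vs!Suc i = vs!0" using a(1,2) by auto
            thus ?thesis using nth_eq_iff_index_eq[OF dv a(3) a(4)] by simp
          qed
        qed
        thus False using i g by simp
      qed
      have "has_cycle_in E ends A"
        unfolding has_cycle_in_def
      proof (intro exI[of _ vs'] exI[of _ es'] conjI)
        show "length vs' = length es'" using lvs' les' by simp
        show "2 \<le> length vs'" using lvs' j0 by simp
        show "distinct vs'" unfolding vs'_def using dv by simp
        show "distinct es'" unfolding es'_def using de gnot by simp
        show "set vs' \<subseteq> A" unfolding vs'_def using sv set_take_subset by fast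
        show "set es' \<subseteq> E" unfolding es'_def using se gE set_take_subset by fastforce
        show "\<forall>i<length vs'. ends (es' ! i) = {vs' ! i, vs' ! ((i + 1) mod length vs')}"
        proof (intro allI impI)
          fix i assume i: "i < length vs'"
          show "ends (es' ! i) = {vs' ! i, vs' ! ((i + 1) mod length vs')}"
          proof (cases "i < j")
            case True
            have "es'!i = es!i" unfolding es'_def using True jn P(1) by (simp add: nth_append)
            moreover have "(i + 1) mod length vs' = Suc i" using True lvs' by simp
            moreover have "vs'!i = vs!i" "vs'!Suc i = vs!Suc i" unfolding vs'_def using True by auto
            moreover have "i < length es" using True jn P(1) by simp
            ultimately show ?thesis using en by simp
          next
            case False
            hence ij: "i = j" using i lvs' by simp
            have "es'!i = g" unfolding es'_def using ij jn P(1) by (simp add: nth_append)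
            moreover have "(i + 1) mod length vs' = 0" using ij lvs' by simp
            moreover have "vs'!i = vs!i" "vs'!0 = vs!0" unfolding vs'_def using ij by simp_all
            moreover have "vs!i = w" "vs!0 = v0" using ij j vs by simp_all
            ultimately show ?thesis using w by auto
          qed
        qed
      qed
      thus ?thesis using nc by simp
    qed
  qed
  then obtain vs es where "length es = card A" "ipath E ends A vs es" by blast
  hence "length vs = Suc (card A)" "distinct vs" "set vs \<subseteq> A" unfolding ipath_def by auto
  hence "card (set vs) = Suc (card A)" "card (set vs) \<le> card A"
    using card_mono[OF finA, of "set vs"] distinct_card[of vs] by auto
  thus False by simp
qed

lemma inn_cycle:
  assumes finE: "finite E" and eg: "\<forall>g\<in>E. card (ends g) = 2"
  shows "finite A \<Longrightarrow> card A \<le> inn E ends A \<Longrightarrow> 1 \<le> inn E ends A \<Longrightarrow> has_cycle_in E ends A"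
proof (induction "card A" arbitrary: A rule: less_induct)
  case less
  show ?case
  proof (cases "\<forall>v\<in>A. 2 \<le> card {g\<in>E. v \<in> ends g \<and> ends g \<subseteq> A}")
    case True
    have "A \<noteq> {}"
    proof
      assume "A = {}"
      hence e0: "{g\<in>E. ends g \<subseteq> A} = {}" using eg by fastforce
      have "inn E ends A = 0" unfolding inn_def by (simp only: e0 card.empty)
      thus False using less.prems(3) by simp
    qed
    thus ?thesis using mindeg_cycle[OF less.prems(1) _ eg finE True] by simp
  next
    case False
    then obtain v where v: "v \<in> A" "card {g\<in>E. v \<in> ends g \<and> ends g \<subseteq> A} \<le> 1" by force
    define Dv where "Dv = {g\<in>E. v \<in> ends g \<and> ends g \<subseteq> A}"
    define A' where "A' = A - {v}"
    have eq: "{g\<in>E. ends g \<subseteq> A'} = {g\<in>E. ends g \<subseteq> A} - Dv" unfolding A'_def Dv_def by auto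
    have "card ({g\<in>E. ends g \<subseteq> A} - Dv) = card {g\<in>E. ends g \<subseteq> A} - card Dv"
      by (rule card_Diff_subset) (use finE in \<open>auto simp: Dv_def\<close>)
    hence innA': "inn E ends A' = inn E ends A - card Dv" unfolding inn_def using eq by simp
    have cA': "card A' = card A - 1" unfolding A'_def using v less.prems(1) by simp
    have cDv: "card Dv \<le> 1" using v Dv_def by simp
    have A'ne: "A' \<noteq> {}"
    proof
      assume "A' = {}"
      hence "A = {v}" using v unfolding A'_def by auto
      hence "{g\<in>E. ends g \<subseteq> A} = {}"
      proof -
        assume Av: "A = {v}"
        { fix g assume "g \<in> E" "ends g \<subseteq> A"
          hence "card (ends g) \<le> card {v}" using Av by (intro card_mono) auto
          hence "card (ends g) \<le> 1" by simp
          hence False using eg \<open>g \<in> E\<close> by simp }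
        thus ?thesis by auto
      qed
      hence "inn E ends A = 0" unfolding inn_def by (simp only: card.empty)
      thus False using less.prems(3) by simp
    qed
    have finA': "finite A'" unfolding A'_def using less.prems(1) by simp
    have "card A' \<ge> 1" using A'ne finA' by (simp add: Suc_le_eq card_gt_0_iff)
    have c1: "card A' \<le> inn E ends A'" using innA' cA' cDv less.prems(2) by simp
    have c2: "1 \<le> inn E ends A'" using c1 \<open>card A' \<ge> 1\<close> by simp
    have "card A > 0" using v less.prems(1) card_gt_0_iff by blast
    hence "card A' < card A" using cA' by simp
    hence "has_cycle_in E ends A'" using less.hyps finA' c1 c2 by blast
    thus ?thesis by (rule has_cycle_mono) (auto simp: A'_def)
  qed
qed

lemma cut_compl:
  assumes "B \<subseteq> V"
  shows "edge_cut V E ends (V - B) = edge_cut V E ends B"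
proof -
  have "V - (V - B) = B" using assms by auto
  thus ?thesis unfolding edge_cut_def by auto
qed

lemma cubic_facts:
  assumes "cubic V E ends"
  shows "finite V" "finite E" "\<forall>g\<in>E. card (ends g) = 2 \<and> ends g \<subseteq> V" "\<forall>v\<in>V. degree E ends v = 3"
  using assms unfolding cubic_def multigraph_def by auto

lemma cut_ge4:
  assumes cub: "cubic V E ends" and cyc: "cyclically_k_edge_connected 4 V E ends"
    and BV: "B \<subseteq> V" and cB: "card B \<ge> 2" and cVB: "card (V - B) \<ge> 2"
  shows "card (edge_cut V E ends B) \<ge> 4"
proof (rule ccontr)
  assume "\<not> ?thesis"
  hence c3: "card (edge_cut V E ends B) \<le> 3" by simp
  note cf = cubic_facts[OF cub]
  have eg: "\<forall>g\<in>E. card (ends g) = 2" using cf(3) by auto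
  have d1: "3 * card B = 2 * inn E ends B + card (edge_cut V E ends B)" by (rule degree_sum[OF cub BV])
  have d2: "3 * card (V - B) = 2 * inn E ends (V - B) + card (edge_cut V E ends B)"
    using degree_sum[OF cub, of "V - B"] cut_compl[OF BV, of E ends] by simp
  have i1: "card B \<le> inn E ends B" "1 \<le> inn E ends B" using d1 c3 cB by presburger+
  have i2: "card (V - B) \<le> inn E ends (V - B)" "1 \<le> inn E ends (V - B)" using d2 c3 cVB by presburger+
  have finB: "finite B" "finite (V - B)" using cf(1) BV finite_subset by auto
  have "has_cycle_in E ends B" using inn_cycle[OF cf(2) eg finB(1) i1] .
  moreover have "has_cycle_in E ends (V - B)" using inn_cycle[OF cf(2) eg finB(2) i2] .
  ultimately have "cyclic_edge_cut V E ends B" unfolding cyclic_edge_cut_def using BV by simp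
  hence "card (edge_cut V E ends B) \<ge> 4" using cyc unfolding cyclically_k_edge_connected_def by blast
  thus False using c3 by simp
qed

lemma even_V:
  assumes cub: "cubic V E ends"
  shows "even (card V)"
proof -
  have "edge_cut V E ends V = {}" unfolding edge_cut_def by auto
  hence "3 * card V = 2 * inn E ends V" using degree_sum[OF cub, of V] by simp
  thus ?thesis by presburger
qed

lemma build_M:
  assumes cub: "cubic V E ends" and fE: "f \<in> E" and ef: "e \<noteq> f"
    and fxy: "ends f = {x,y}"
    and pm: "pmf (V - {x,y}) (\<lambda>u v. \<exists>g\<in>E-{e}. ends g = {u,v}) m"
  shows "\<exists>M. perfect_matching V E ends M \<and> e \<notin> M \<and> f \<in> M"
proof -
  let ?W = "V - {x,y}"
  note cf = cubic_facts[OF cub]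
  define h where "h v = (SOME g. g \<in> E-{e} \<and> ends g = {v, m v})" for v
  have hv: "\<And>v. v \<in> ?W \<Longrightarrow> h v \<in> E-{e} \<and> ends (h v) = {v, m v}"
  proof -
    fix v assume v: "v \<in> ?W"
    have "\<exists>g. g \<in> E-{e} \<and> ends g = {v, m v}" using pm v unfolding pmf_def by blast
    thus "h v \<in> E-{e} \<and> ends (h v) = {v, m v}" unfolding h_def by (rule someI_ex)
  qed
  have mW: "\<And>v. v \<in> ?W \<Longrightarrow> m v \<in> ?W \<and> m v \<noteq> v \<and> m (m v) = v" using pm unfolding pmf_def by auto
  have hm: "\<And>v. v \<in> ?W \<Longrightarrow> h (m v) = h v"
  proof -
    fix v assume v: "v \<in> ?W"
    have "{m v, m (m v)} = {v, m v}" using mW[OF v] by auto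
    thus "h (m v) = h v" unfolding h_def by simp
  qed
  define M where "M = insert f (h ` ?W)"
  have "perfect_matching V E ends M"
    unfolding perfect_matching_def
  proof (intro conjI ballI)
    show "M \<subseteq> E" unfolding M_def using fE hv by auto
    fix v assume vV: "v \<in> V"
    show "card {g\<in>M. v \<in> ends g} = 1"
    proof (cases "v \<in> {x,y}")
      case True
      have "{g\<in>M. v \<in> ends g} = {f}"
      proof -
        have "\<And>w. w \<in> ?W \<Longrightarrow> v \<notin> ends (h w)" using hv mW True by fastforce
        thus ?thesis unfolding M_def using True fxy by auto
      qed
      thus ?thesis by simp
    next
      case False
      hence vW: "v \<in> ?W" using vV by simp
      have "{g\<in>M. v \<in> ends g} = {h v}"
      proof
        show "{h v} \<subseteq> {g\<in>M. v \<in> ends g}" unfolding M_def using hv[OF vW] vW by auto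
        show "{g\<in>M. v \<in> ends g} \<subseteq> {h v}"
        proof
          fix g assume g: "g \<in> {g\<in>M. v \<in> ends g}"
          show "g \<in> {h v}"
          proof (cases "g = f")
            case True thus ?thesis using g fxy False by auto
          next
            case False
            then obtain w where w: "w \<in> ?W" "g = h w" using g unfolding M_def by auto
            hence "v \<in> {w, m w}" using hv g by auto
            thus ?thesis
            proof
              assume "v = w" thus ?thesis using w by simp
            next
              assume "v \<in> {m w}"
              hence "v = m w" by simp
              hence "m v = w" using mW[OF w(1)] by simp
              hence "h w = h v" using hm[OF vW] by simp
              thus ?thesis using w by simp
            qed
          qed
        qed
      qed
      thus ?thesis by simp
    qed
  qed
  moreover have "e \<notin> M" unfolding M_def using ef hv by auto
  moreover have "f \<in> M" unfolding M_def by simp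
  ultimately show ?thesis by blast
qed

lemma easy_dir:
  assumes cub: "cubic V E ends" and eE: "e \<in> E" and fE: "f \<in> E" and ef: "e \<noteq> f"
    and bip: "bipartition V (E - {e, f}) ends X" and eX: "ends e \<subseteq> X" and fX: "ends f \<subseteq> V - X"
    and pm: "perfect_matching V E ends M" and eM: "e \<notin> M" and fM: "f \<in> M"
  shows False
proof -
  note cf = cubic_facts[OF cub]
  have XV: "X \<subseteq> V" and bp: "\<forall>g\<in>E-{e,f}. card (ends g \<inter> X) = 1 \<and> card (ends g \<inter> (V - X)) = 1"
    using bip unfolding bipartition_def by auto
  have finX: "finite X" "finite (V - X)" using cf(1) XV finite_subset by auto
  have ce: "card (ends e) = 2" "card (ends f) = 2" using cf(3) eE fE by auto
  have degsum: "\<And>A. A \<subseteq> V \<Longrightarrow> 3 * card A = (\<Sum>g\<in>E. card (ends g \<inter> A))"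
  proof -
    fix A assume AV: "A \<subseteq> V"
    have finA: "finite A" using cf(1) AV finite_subset by auto
    have "(\<Sum>v\<in>A. degree E ends v) = (\<Sum>v\<in>A. 3)" by (rule sum.cong) (use cf(4) AV in auto)
    hence "3 * card A = (\<Sum>v\<in>A. degree E ends v)" by simp
    also have "\<dots> = (\<Sum>g\<in>E. card (ends g \<inter> A))" unfolding degree_def by (rule double_count[OF finA cf(2)])
    finally show "3 * card A = (\<Sum>g\<in>E. card (ends g \<inter> A))" .
  qed
  have split: "\<And>F \<phi>. finite F \<Longrightarrow> e \<in> F \<Longrightarrow> f \<in> F \<Longrightarrow> (\<Sum>g\<in>F. \<phi> g) = \<phi> e + \<phi> f + (\<Sum>g\<in>F-{e,f}. \<phi> g :: nat)"
  proof -
    fix F and \<phi> :: "'b \<Rightarrow> nat" assume F: "finite F" "e \<in> F" "f \<in> F"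
    have "(\<Sum>g\<in>F. \<phi> g) = \<phi> e + (\<Sum>g\<in>F-{e}. \<phi> g)" using F by (simp add: sum.remove)
    also have "(\<Sum>g\<in>F-{e}. \<phi> g) = \<phi> f + (\<Sum>g\<in>F-{e}-{f}. \<phi> g)" using F ef by (intro sum.remove) auto
    also have "F - {e} - {f} = F - {e,f}" by auto
    finally show "(\<Sum>g\<in>F. \<phi> g) = \<phi> e + \<phi> f + (\<Sum>g\<in>F-{e,f}. \<phi> g)" by simp
  qed
  have s1: "(\<Sum>g\<in>E-{e,f}. card (ends g \<inter> X)) = card (E - {e,f})"
    using bp by simp
  have s2: "(\<Sum>g\<in>E-{e,f}. card (ends g \<inter> (V - X))) = card (E - {e,f})"
    using bp by simp
  have e1: "card (ends e \<inter> X) = 2" using eX ce by (simp add: Int_absorb2)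
  have "ends e \<inter> (V - X) = {}" using eX by auto
  hence e2: "card (ends e \<inter> (V - X)) = 0" by simp
  have "ends f \<inter> X = {}" using fX by auto
  hence f1: "card (ends f \<inter> X) = 0" by simp
  have f2: "card (ends f \<inter> (V - X)) = 2" using fX ce by (simp add: Int_absorb2)
  have A: "3 * card X = 2 + card (E - {e,f})"
    using degsum[OF XV] split[OF cf(2) eE fE, of "\<lambda>g. card (ends g \<inter> X)"] s1 e1 f1 by simp
  have B: "3 * card (V - X) = 2 + card (E - {e,f})"
    using degsum[of "V - X"] split[OF cf(2) eE fE, of "\<lambda>g. card (ends g \<inter> (V - X))"] s2 e2 f2 by simp
  have MsE: "M \<subseteq> E" and pmc: "\<forall>v\<in>V. card {m\<in>M. v \<in> ends m} = 1" using pm unfolding perfect_matching_def by auto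
  have finM: "finite M" using cf(2) MsE finite_subset by auto
  have msum: "\<And>A. A \<subseteq> V \<Longrightarrow> card A = (\<Sum>g\<in>M. card (ends g \<inter> A))"
  proof -
    fix A assume AV: "A \<subseteq> V"
    have finA: "finite A" using cf(1) AV finite_subset by auto
    have "(\<Sum>v\<in>A. card {m\<in>M. v \<in> ends m}) = (\<Sum>v\<in>A. 1)" by (rule sum.cong) (use pmc AV in auto)
    hence "card A = (\<Sum>v\<in>A. card {m\<in>M. v \<in> ends m})" by simp
    also have "\<dots> = (\<Sum>g\<in>M. card (ends g \<inter> A))" by (rule double_count[OF finA finM])
    finally show "card A = (\<Sum>g\<in>M. card (ends g \<inter> A))" .
  qed
  have Mr: "\<And>\<phi>. (\<Sum>g\<in>M. \<phi> g) = \<phi> f + (\<Sum>g\<in>M-{f}. \<phi> g :: nat)" using finM fM by (simp add: sum.remove)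
  have Mo: "\<And>g. g \<in> M - {f} \<Longrightarrow> g \<in> E - {e,f}" using MsE eM by auto
  have t1: "(\<Sum>g\<in>M-{f}. card (ends g \<inter> X)) = card (M - {f})"
    using bp Mo by simp
  have t2: "(\<Sum>g\<in>M-{f}. card (ends g \<inter> (V - X))) = card (M - {f})"
    using bp Mo by simp
  have C: "card X = card (M - {f})" using msum[OF XV] Mr[of "\<lambda>g. card (ends g \<inter> X)"] t1 f1 by simp
  have D: "card (V - X) = 2 + card (M - {f})" using msum[of "V - X"] Mr[of "\<lambda>g. card (ends g \<inter> (V - X))"] t2 f2 by simp
  show False using A B C D by simp
qed

lemma parity_arith:
  fixes s o' v w :: nat
  assumes "s < o'" "even v" "w = v - 2" "v \<ge> 2" "s \<le> w"
  shows "even (w - s) = even o' \<Longrightarrow> s + 2 \<le> o'"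
  using assms by presburger

lemma final_arith:
  fixes p ns sc sct ct k k2 od s t i :: nat
  assumes "3 * p + ns \<le> sc" "sc \<le> sct + k" "sct \<le> ct" "k \<le> k2" "k2 \<le> 2" "od \<le> p"
    "s + 2 \<le> od" "3 * t = 2 * i + ct" "1 \<le> i" "t = s + 2"
  shows "ns = 0 \<and> i = 1 \<and> k2 = 2"
  using assms by linarith

lemma hard_dir:
  assumes cub: "cubic V E ends" and cyc: "cyclically_k_edge_connected 4 V E ends"
    and eE: "e \<in> E" and fE: "f \<in> E" and ef: "e \<noteq> f"
    and noM: "\<not> (\<exists>M. perfect_matching V E ends M \<and> e \<notin> M \<and> f \<in> M)"
  shows "\<exists>X. bipartition V (E - {e, f}) ends X \<and> ends e \<subseteq> X \<and> ends f \<subseteq> V - X"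
proof -
  note cf = cubic_facts[OF cub]
  have eg: "\<forall>g\<in>E. card (ends g) = 2" using cf(3) by auto
  have finEnds: "\<And>g. g \<in> E \<Longrightarrow> finite (ends g)"
  proof -
    fix g assume "g \<in> E"
    hence "card (ends g) = 2" using eg by auto
    thus "finite (ends g)" using card.infinite[of "ends g"] by auto
  qed
  obtain x y where fxy: "ends f = {x,y}" "x \<noteq> y" using cf(3) fE by (meson card_2_iff)
  have xyV: "x \<in> V" "y \<in> V" using cf(3) fE fxy by auto
  define W where "W = V - {x,y}"
  define adj where "adj = (\<lambda>u v. \<exists>g\<in>E-{e}. ends g = {u,v})"
  have sym: "\<And>u v. adj u v \<Longrightarrow> adj v u" unfolding adj_def by (auto simp: insert_commute)
  have finW: "finite W" unfolding W_def using cf(1) by simp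
  have ntc: "\<not> tutte_cond W adj"
  proof
    assume "tutte_cond W adj"
    then obtain m where "pmf W adj m" using tutte[of W adj] finW sym by blast
    hence "pmf (V - {x,y}) (\<lambda>u v. \<exists>g\<in>E-{e}. ends g = {u,v}) m" unfolding W_def adj_def .
    hence "\<exists>M. perfect_matching V E ends M \<and> e \<notin> M \<and> f \<in> M"
      by (rule build_M[OF cub fE ef fxy(1)])
    thus False using noM by simp
  qed
  hence "\<exists>S P. S \<subseteq> W \<and> sep_part (W - S) adj P \<and> \<not> card {B\<in>P. odd (card B)} \<le> card S"
    unfolding tutte_cond_def by blast
  then obtain S P where SW: "S \<subseteq> W" and sp: "sep_part (W - S) adj P"
    and big0: "\<not> card {B\<in>P. odd (card B)} \<le> card S" by blast
  have big: "card S < card {B\<in>P. odd (card B)}" using big0 by simp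
  define Od where "Od = {B\<in>P. odd (card B)}"
  define T where "T = S \<union> {x,y}"
  have spd: "\<Union>P = W - S \<and> {} \<notin> P \<and> (\<forall>B1\<in>P. \<forall>B2\<in>P. B1 \<noteq> B2 \<longrightarrow> B1 \<inter> B2 = {}) \<and>
     (\<forall>B1\<in>P. \<forall>B2\<in>P. B1 \<noteq> B2 \<longrightarrow> (\<forall>x\<in>B1. \<forall>y\<in>B2. \<not> adj x y))"
    using sp unfolding sep_part_def .
  have UP: "\<Union>P = W - S" using spd by (rule conjunct1)
  have neP: "{} \<notin> P" using spd by (elim conjE)
  have disjP0: "\<forall>B1\<in>P. \<forall>B2\<in>P. B1 \<noteq> B2 \<longrightarrow> B1 \<inter> B2 = {}" using spd by (elim conjE)
  have sepP0: "\<forall>B1\<in>P. \<forall>B2\<in>P. B1 \<noteq> B2 \<longrightarrow> (\<forall>x\<in>B1. \<forall>y\<in>B2. \<not> adj x y)" using spd by (elim conjE)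
  have disjP: "\<And>B1 B2. B1 \<in> P \<Longrightarrow> B2 \<in> P \<Longrightarrow> B1 \<noteq> B2 \<Longrightarrow> B1 \<inter> B2 = {}"
    using disjP0 by blast
  have sepP: "\<And>B1 B2 p q. B1 \<in> P \<Longrightarrow> B2 \<in> P \<Longrightarrow> B1 \<noteq> B2 \<Longrightarrow> p \<in> B1 \<Longrightarrow> q \<in> B2 \<Longrightarrow> \<not> adj p q"
    using sepP0 by blast
  have TV: "T \<subseteq> V" unfolding T_def using SW xyV W_def by auto
  have VT: "V - T = W - S" unfolding T_def W_def by auto
  have finS: "finite S" using finW SW finite_subset by auto
  have cT: "card T = card S + 2"
  proof -
    have "S \<inter> {x,y} = {}" using SW unfolding W_def by auto
    hence "card (S \<union> {x,y}) = card S + card {x,y}" by (intro card_Un_disjoint) (use finS in auto)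
    hence "card T = card S + card {x,y}" unfolding T_def .
    thus ?thesis using fxy(2) by simp
  qed
  have Psub: "\<And>B. B \<in> P \<Longrightarrow> B \<subseteq> V - T" using UP VT by auto
  have BV: "\<And>B. B \<in> P \<Longrightarrow> B \<subseteq> V" using Psub by auto
  have finB: "\<And>B. B \<in> P \<Longrightarrow> finite B" using BV cf(1) finite_subset by blast
  have finP: "finite P"
  proof -
    have "P \<subseteq> Pow (W - S)" using UP by auto
    moreover have "finite (Pow (W - S))" using finW by simp
    ultimately show ?thesis using finite_subset by blast
  qed
  define cut where "cut B = edge_cut V E ends B" for B
  have finCut: "\<And>B. finite (cut B)" unfolding cut_def edge_cut_def using cf(2) by simp
  have lowB: "\<And>B. B \<in> P \<Longrightarrow> (if card B = 1 then 3 else 4) \<le> card (cut B)"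
  proof -
    fix B assume B: "B \<in> P"
    show "(if card B = 1 then 3 else 4) \<le> card (cut B)"
    proof (cases "card B = 1")
      case True
      have "inn E ends B = 0"
      proof -
        have "{g\<in>E. ends g \<subseteq> B} = {}"
        proof -
          { fix g assume g: "g \<in> E" "ends g \<subseteq> B"
            have "card (ends g) \<le> card B" using g finB[OF B] by (intro card_mono) auto
            hence False using True eg g by simp }
          thus ?thesis by auto
        qed
        thus ?thesis unfolding inn_def by (simp only: card.empty)
      qed
      thus ?thesis using degree_sum[OF cub BV[OF B]] True unfolding cut_def by simp
    next
      case False
      have "B \<noteq> {}" using B neP by auto
      hence "card B > 0" using finB[OF B] card_gt_0_iff by blast
      hence "card B \<ge> 2" using False by simp
      moreover have "card (V - B) \<ge> 2"
      proof -
        have "{x,y} \<subseteq> V - B" using Psub[OF B] xyV unfolding T_def by auto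
        hence "card {x,y} \<le> card (V - B)" using cf(1) by (intro card_mono) auto
        thus ?thesis using fxy(2) by simp
      qed
      ultimately show ?thesis using cut_ge4[OF cub cyc BV[OF B]] False unfolding cut_def by simp
    qed
  qed
  define CT where "CT B = {g\<in>E. g \<noteq> e \<and> ends g \<inter> B \<noteq> {} \<and> ends g \<inter> T \<noteq> {}}" for B
  have finCT: "\<And>B. finite (CT B)" unfolding CT_def using cf(2) by simp
  have upB: "\<And>B. B \<in> P \<Longrightarrow> card (cut B) \<le> card (CT B) + (if e \<in> cut B then 1 else 0)"
  proof -
    fix B assume B: "B \<in> P"
    have sub: "cut B - {e} \<subseteq> CT B"
    proof
      fix g assume g: "g \<in> cut B - {e}"
      hence gE: "g \<in> E" and gB: "ends g \<inter> B \<noteq> {}" and gVB: "ends g \<inter> (V - B) \<noteq> {}" and ge: "g \<noteq> e"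
        unfolding cut_def edge_cut_def by auto
      obtain p where p: "p \<in> ends g" "p \<in> B" using gB by auto
      obtain q where q: "q \<in> ends g" "q \<in> V - B" using gVB by auto
      have pq: "p \<noteq> q" using p q by auto
      have epq: "ends g = {p,q}"
      proof -
        have "{p,q} \<subseteq> ends g" using p q by auto
        moreover have "card {p,q} = card (ends g)" using pq eg gE by simp
        moreover have "finite (ends g)" using gE eg card.infinite by fastforce
        ultimately show ?thesis by (intro card_subset_eq[symmetric]) auto
      qed
      have "q \<in> T"
      proof (rule ccontr)
        assume "q \<notin> T"
        hence "q \<in> W - S" using q VT by auto
        then obtain B' where B': "B' \<in> P" "q \<in> B'" using UP by auto
        have "B' \<noteq> B" using B' q by auto
        moreover have "adj p q" unfolding adj_def using gE ge epq by auto
        ultimately show False using sepP[OF B B'(1) _ p(2) B'(2)] by auto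
      qed
      thus "g \<in> CT B" unfolding CT_def using gE ge p q by auto
    qed
    have "card (cut B) = card (cut B - {e}) + (if e \<in> cut B then 1 else 0)"
    proof (cases "e \<in> cut B")
      case True
      have "card (cut B - {e}) = card (cut B) - 1" using True finCut by (simp add: card_Diff_singleton)
      moreover have "card (cut B) > 0" using True finCut card_gt_0_iff by blast
      ultimately show ?thesis using True by simp
    next
      case False thus ?thesis by simp
    qed
    moreover have "card (cut B - {e}) \<le> card (CT B)" using sub finCT by (intro card_mono) auto
    ultimately show "card (cut B) \<le> card (CT B) + (if e \<in> cut B then 1 else 0)" by simp
  qed
  define K where "K = {B\<in>P. e \<in> cut B}"
  have sumUp: "(\<Sum>B\<in>P. card (cut B)) \<le> (\<Sum>B\<in>P. card (CT B)) + card K"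
  proof -
    have "(\<Sum>B\<in>P. card (cut B)) \<le> (\<Sum>B\<in>P. card (CT B) + (if e \<in> cut B then 1 else 0))"
      by (rule sum_mono) (rule upB)
    also have "\<dots> = (\<Sum>B\<in>P. card (CT B)) + (\<Sum>B\<in>P. if e \<in> cut B then 1 else 0)" by (simp add: sum.distrib)
    also have "(\<Sum>B\<in>P. if e \<in> cut B then 1 else 0) = card K" unfolding K_def by (rule sum_indicator_card[OF finP])
    finally show ?thesis .
  qed
  have CTdisj: "\<And>B1 B2. B1 \<in> P \<Longrightarrow> B2 \<in> P \<Longrightarrow> B1 \<noteq> B2 \<Longrightarrow> CT B1 \<inter> CT B2 = {}"
  proof -
    fix B1 B2 assume B: "B1 \<in> P" "B2 \<in> P" "B1 \<noteq> B2"
    show "CT B1 \<inter> CT B2 = {}"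
    proof (rule ccontr)
      assume "CT B1 \<inter> CT B2 \<noteq> {}"
      then obtain g where g: "g \<in> E" "ends g \<inter> B1 \<noteq> {}" "ends g \<inter> B2 \<noteq> {}" "ends g \<inter> T \<noteq> {}"
        unfolding CT_def by auto
      obtain p1 p2 t where pt: "p1 \<in> ends g" "p1 \<in> B1" "p2 \<in> ends g" "p2 \<in> B2" "t \<in> ends g" "t \<in> T"
        using g by auto
      have d: "p1 \<noteq> p2" "p1 \<noteq> t" "p2 \<noteq> t" using pt disjP[OF B] Psub[OF B(1)] Psub[OF B(2)] by auto
      have "card {p1,p2,t} \<le> card (ends g)"
        using pt g finEnds[OF g(1)] by (intro card_mono) auto
      thus False using d g eg by simp
    qed
  qed
  have sumCT: "(\<Sum>B\<in>P. card (CT B)) \<le> card (cut T)"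
  proof -
    have "(\<Sum>B\<in>P. card (CT B)) = card (\<Union>B\<in>P. CT B)"
      by (rule card_UN_disjoint[symmetric]) (use finP finCT CTdisj in auto)
    also have "\<dots> \<le> card (cut T)"
    proof (rule card_mono[OF finCut])
      show "(\<Union>B\<in>P. CT B) \<subseteq> cut T"
      proof
        fix g assume "g \<in> (\<Union>B\<in>P. CT B)"
        then obtain B where B: "B \<in> P" "g \<in> CT B" by auto
        thus "g \<in> cut T" using Psub[OF B(1)] unfolding CT_def cut_def edge_cut_def by auto
      qed
    qed
    finally show ?thesis .
  qed
  define k2 where "k2 = card (ends e \<inter> (W - S))"
  have cK: "card K \<le> k2"
  proof -
    define r where "r B = (SOME p. p \<in> ends e \<inter> B)" for B
    have rK: "\<And>B. B \<in> K \<Longrightarrow> r B \<in> ends e \<inter> B"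
    proof -
      fix B assume "B \<in> K"
      hence "ends e \<inter> B \<noteq> {}" unfolding K_def cut_def edge_cut_def by auto
      hence "\<exists>p. p \<in> ends e \<inter> B" by blast
      thus "r B \<in> ends e \<inter> B" unfolding r_def by (rule someI_ex)
    qed
    have "inj_on r K"
    proof (rule inj_onI)
      fix B1 B2 assume B: "B1 \<in> K" "B2 \<in> K" "r B1 = r B2"
      have "r B1 \<in> B1" "r B2 \<in> B2" using rK B(1,2) by auto
      hence "r B1 \<in> B1 \<inter> B2" using B(3) by simp
      thus "B1 = B2" using disjP B unfolding K_def by auto
    qed
    moreover have "r ` K \<subseteq> ends e \<inter> (W - S)" using rK UP unfolding K_def by auto
    moreover have "finite (ends e \<inter> (W - S))" using finW by simp
    ultimately show ?thesis unfolding k2_def by (intro card_inj_on_le) auto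
  qed
  have k2le: "k2 \<le> 2"
  proof -
    have "card (ends e \<inter> (W - S)) \<le> card (ends e)" using finEnds[OF eE]
      by (intro card_mono) auto
    thus ?thesis unfolding k2_def using eg eE by simp
  qed
  define ns where "ns = card {B\<in>P. card B \<noteq> 1}"
  have sumLow: "3 * card P + ns \<le> (\<Sum>B\<in>P. card (cut B))"
  proof -
    have "(\<Sum>B\<in>P. (if card B = 1 then 3 else 4)) \<le> (\<Sum>B\<in>P. card (cut B))"
      by (rule sum_mono) (rule lowB)
    moreover have "(\<Sum>B\<in>P. (if card B = 1 then 3 else 4)) = (\<Sum>B\<in>P. 3 + (if card B \<noteq> 1 then 1 else 0::nat))"
      by (rule sum.cong) auto
    moreover have "\<dots> = 3 * card P + ns" unfolding ns_def
      using sum_indicator_card[OF finP, of "\<lambda>B. card B \<noteq> 1"] by (simp add: sum.distrib)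
    ultimately show ?thesis by simp
  qed
  have cOdP: "card Od \<le> card P" unfolding Od_def using finP by (intro card_mono) auto
  have parity: "card S + 2 \<le> card Od"
  proof -
    have evV: "even (card V)" by (rule even_V[OF cub])
    have cW: "card W = card V - 2" unfolding W_def using xyV fxy(2) cf(1) by (simp add: card_Diff_subset)
    have cV: "card V \<ge> 2"
    proof -
      have "card {x,y} \<le> card V" using xyV cf(1) by (intro card_mono) auto
      thus ?thesis using fxy(2) by simp
    qed
    have cWS: "card (W - S) = card W - card S" using SW finS by (simp add: card_Diff_subset)
    have cSW: "card S \<le> card W" using SW finW by (simp add: card_mono)
    have "card (\<Union>P) = sum card P"
      by (rule card_Union_disjoint) (use disjP finB in \<open>auto simp: pairwise_def disjnt_def\<close>)
    hence "card (W - S) = sum card P" using UP by simp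
    moreover have "even (sum card P) = even (card Od)" unfolding Od_def using even_sum_iff[OF finP] by simp
    ultimately have "even (card W - card S) = even (card Od)" using cWS by simp
    thus ?thesis using parity_arith[OF big[folded Od_def] evV cW cV cSW] by blast
  qed
  have dT: "3 * card T = 2 * inn E ends T + card (cut T)" unfolding cut_def by (rule degree_sum[OF cub TV])
  have fT: "f \<in> {g\<in>E. ends g \<subseteq> T}" using fE fxy unfolding T_def by auto
  have finIT: "finite {g\<in>E. ends g \<subseteq> T}" using cf(2) by simp
  have "card {g\<in>E. ends g \<subseteq> T} > 0" using fT finIT card_gt_0_iff by blast
  hence innT: "inn E ends T \<ge> 1" unfolding inn_def by simp
  have ar: "ns = 0 \<and> inn E ends T = 1 \<and> k2 = 2"
    by (rule final_arith[OF sumLow sumUp sumCT cK k2le cOdP parity dT innT cT])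
  have single: "\<And>B. B \<in> P \<Longrightarrow> card B = 1"
  proof -
    fix B assume B: "B \<in> P"
    have "{B\<in>P. card B \<noteq> 1} = {}" using ar finP unfolding ns_def by simp
    thus "card B = 1" using B by auto
  qed
  have onlyf: "\<And>g. g \<in> E \<Longrightarrow> ends g \<subseteq> T \<Longrightarrow> g = f"
  proof -
    fix g assume g: "g \<in> E" "ends g \<subseteq> T"
    show "g = f"
    proof (rule ccontr)
      assume "g \<noteq> f"
      hence "{f, g} \<subseteq> {g\<in>E. ends g \<subseteq> T}" using fT g by auto
      hence "card {f,g} \<le> inn E ends T" unfolding inn_def using finIT by (intro card_mono) auto
      thus False using ar \<open>g \<noteq> f\<close> by simp
    qed
  qed
  have eX: "ends e \<subseteq> W - S"
  proof -
    have "card (ends e \<inter> (W - S)) = card (ends e)" using ar eg eE unfolding k2_def by simp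
    moreover have "finite (ends e)" using eg eE card.infinite by fastforce
    ultimately have "ends e \<inter> (W - S) = ends e" by (intro card_subset_eq) auto
    thus ?thesis by auto
  qed
  show ?thesis
  proof (intro exI[of _ "W - S"] conjI)
    show "ends e \<subseteq> W - S" by (rule eX)
    show "ends f \<subseteq> V - (W - S)" using fxy xyV unfolding W_def by auto
    show "bipartition V (E - {e, f}) ends (W - S)"
      unfolding bipartition_def
    proof (rule conjI)
      show "W - S \<subseteq> V" unfolding W_def by auto
      show "\<forall>g\<in>E - {e, f}. card (ends g \<inter> (W - S)) = 1 \<and> card (ends g \<inter> (V - (W - S))) = 1"
      proof
      fix g assume g: "g \<in> E - {e, f}"
      obtain p q where pq: "ends g = {p,q}" "p \<noteq> q" using eg g by (meson DiffD1 card_2_iff)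
      have pqV: "p \<in> V" "q \<in> V" using cf(3) g pq by auto
      have notT: "\<not> (p \<in> T \<and> q \<in> T)" using onlyf[of g] g pq by auto
      have notX: "\<not> (p \<in> W - S \<and> q \<in> W - S)"
      proof
        assume pqX: "p \<in> W - S \<and> q \<in> W - S"
        then obtain B1 B2 where B: "B1 \<in> P" "p \<in> B1" "B2 \<in> P" "q \<in> B2" using UP by blast
        have "adj p q" unfolding adj_def using g pq by auto
        hence "B1 = B2" using sepP[OF B(1) B(3) _ B(2) B(4)] by auto
        hence "{p,q} \<subseteq> B1" using B by auto
        hence "card {p,q} \<le> card B1" using finB[OF B(1)] by (intro card_mono) auto
        thus False using single[OF B(1)] pq(2) by simp
      qed
      have VX: "V - (W - S) = T" using VT TV by auto
      have "(p \<in> W - S \<and> q \<in> T) \<or> (p \<in> T \<and> q \<in> W - S)" using notT notX pqV VT by auto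
      thus "card (ends g \<inter> (W - S)) = 1 \<and> card (ends g \<inter> (V - (W - S))) = 1"
      proof
        assume h: "p \<in> W - S \<and> q \<in> T"
        have "q \<notin> W - S" "p \<notin> T" using h VT TV by auto
        hence "ends g \<inter> (W - S) = {p}" "ends g \<inter> (V - (W - S)) = {q}" using pq h VX by auto
        thus ?thesis by simp
      next
        assume h: "p \<in> T \<and> q \<in> W - S"
        have "p \<notin> W - S" "q \<notin> T" using h VT TV by auto
        hence "ends g \<inter> (W - S) = {q}" "ends g \<inter> (V - (W - S)) = {p}" using pq h VX by auto
        thus ?thesis by simp
      qed
      qed
    qed
  qed
qed

theorem mainTheorem4:
  fixes V :: "'v set" and E :: "'e set" and ends :: "'e \<Rightarrow> 'v set" and e f :: 'e
  assumes "cubic V E ends"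
    and "cyclically_k_edge_connected 4 V E ends"
    and "e \<in> E" and "f \<in> E" and "e \<noteq> f"
  shows "(\<not> (\<exists>M. perfect_matching V E ends M \<and> e \<notin> M \<and> f \<in> M)) \<longleftrightarrow>
         (\<exists>X. bipartition V (E - {e, f}) ends X \<and> ends e \<subseteq> X \<and> ends f \<subseteq> V - X)"
proof
  assume "\<not> (\<exists>M. perfect_matching V E ends M \<and> e \<notin> M \<and> f \<in> M)"
  thus "\<exists>X. bipartition V (E - {e, f}) ends X \<and> ends e \<subseteq> X \<and> ends f \<subseteq> V - X"
    by (rule hard_dir[OF assms])
next
  assume "\<exists>X. bipartition V (E - {e, f}) ends X \<and> ends e \<subseteq> X \<and> ends f \<subseteq> V - X"
  then obtain X where X: "bipartition V (E - {e, f}) ends X" "ends e \<subseteq> X" "ends f \<subseteq> V - X" by blast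
  show "\<not> (\<exists>M. perfect_matching V E ends M \<and> e \<notin> M \<and> f \<in> M)"
  proof
    assume "\<exists>M. perfect_matching V E ends M \<and> e \<notin> M \<and> f \<in> M"
    then obtain M where "perfect_matching V E ends M" "e \<notin> M" "f \<in> M" by blast
    thus False using easy_dir[OF assms(1,3,4,5) X] by blast
  qed
qed

end
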